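(* Let $p$ be an odd prime and let $d\in\mathbb{Z}$ with $\left(\frac{-d}{p}\right)=-1$. For an integer $m\ge 0$ put $S_m(d,p)=\det\left[(j^2+dk^2)^m\right]_{1\le j,k\le (p-1)/2}$. (i) We have $\left(\frac{S_{p-2}(d,p)}{p}\right)=\left(\frac 2p\right)$. Moreover, $$\det\left[\frac1{j^2+dk^2}\right]_{1\le j,k\le (p-1)/2}\equiv\begin{cases}d^{(p-1)/4}\pmod p&\text{if } p\equiv1\pmod4,\\(-1)^{(p+1)/4}\pmod p&\text{if } p\equiv3\pmod4.\end{cases}$$ (ii) We have $\left(\frac{S_{p-3}(d,p)}{p}\right)=\frac{1-\left(\frac{-1}{p}\right)}{2}$. Moreover, when $p\equiv3\pmod4$, $$\det\left[\frac1{(j^2+dk^2)^2}\right]_{1\le j,k\le (p-1)/2}\equiv\frac14\prod_{r=1}^{(p-3)/4}\left(r+\frac14\right)^2\pmod p.$$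
   Context: $\left(\frac{\cdot}{p}\right)$ is the Legendre symbol. Since $\left(\frac{-d}{p}\right)=-1$, no $j^2+dk^2$ with $1\le j,k\le(p-1)/2$ is divisible by $p$, so the determinants above are rational numbers whose denominators are prime to $p$; congruences modulo $p$ between such rationals are understood in the ring of rationals with denominator prime to $p$. *)

theory Defs
  imports "HOL-Number_Theory.Number_Theory" "Jordan_Normal_Form.Determinant"
begin

definition rat_cong :: "rat \<Rightarrow> rat \<Rightarrow> int \<Rightarrow> bool" where
  "rat_cong a b p \<longleftrightarrow> (\<exists>x y :: int. p dvd x \<and> \<not> p dvd y \<and> a - b = of_int x / of_int y)"

text \<open>S_m(d,p) = det[(j^2+dk^2)^m]_{1<=j,k<=(p-1)/2} (indices shifted to 0-based).\<close>
definition S :: "nat \<Rightarrow> int \<Rightarrow> nat \<Rightarrow> int" where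
  "S m d p = det (mat ((p - 1) div 2) ((p - 1) div 2)
      (\<lambda>(j, k). (int (j + 1) ^ 2 + d * int (k + 1) ^ 2) ^ m))"

definition Dinv :: "nat \<Rightarrow> int \<Rightarrow> nat \<Rightarrow> rat" where
  "Dinv e d p = det (mat ((p - 1) div 2) ((p - 1) div 2)
      (\<lambda>(j, k). 1 / (of_int (int (j + 1) ^ 2 + d * int (k + 1) ^ 2)) ^ e))"

end

theory Submission
  imports Defs
begin

lemma det_cong_int:
  fixes A B :: "int mat"
  assumes A: "A \<in> carrier_mat n n" and B: "B \<in> carrier_mat n n"
    and c: "\<And>i j. i < n \<Longrightarrow> j < n \<Longrightarrow> [A $$ (i,j) = B $$ (i,j)] (mod m)"
  shows "[det A = det B] (mod m)"
proof -
  have "[(\<Sum>q\<in>{q. q permutes {0..<n}}. signof q * (\<Prod>i = 0..<n. A $$ (i, q i)))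
       = (\<Sum>q\<in>{q. q permutes {0..<n}}. signof q * (\<Prod>i = 0..<n. B $$ (i, q i)))] (mod m)"
  proof (rule cong_sum, rule cong_mult[OF cong_refl], rule cong_prod)
    fix q i assume "q \<in> {q. q permutes {0..<n}}" "i \<in> {0..<n}"
    then show "[A $$ (i, q i) = B $$ (i, q i)] (mod m)"
      using c permutes_in_image by fastforce
  qed
  then show ?thesis using det_def'[OF A] det_def'[OF B] by simp
qed

lemma det_row_scale:
  fixes A :: "'a::comm_ring_1 mat"
  assumes A: "A \<in> carrier_mat n n"
  shows "det (mat n n (\<lambda>(i,j). w i * A $$ (i,j))) = (\<Prod>i<n. w i) * det A"
proof -
  have "det (mat n n (\<lambda>(i,j). w i * A $$ (i,j))) =
    (\<Sum>q\<in>{q. q permutes {0..<n}}. signof q * (\<Prod>i = 0..<n. w i * A $$ (i, q i)))"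
    by (subst det_def'[of _ n]) (auto intro!: sum.cong prod.cong permutes_in_image)
  also have "\<dots> = (\<Sum>q\<in>{q. q permutes {0..<n}}. (\<Prod>i<n. w i) * (signof q * (\<Prod>i = 0..<n. A $$ (i, q i))))"
    by (auto intro!: sum.cong simp: prod.distrib atLeast0LessThan)
  also have "\<dots> = (\<Prod>i<n. w i) * det A"
    by (simp add: det_def'[OF A] sum_distrib_left)
  finally show ?thesis .
qed

lemma det_col_scale:
  fixes A :: "'a::comm_ring_1 mat"
  assumes A: "A \<in> carrier_mat n n"
  shows "det (mat n n (\<lambda>(i,j). A $$ (i,j) * w j)) = (\<Prod>i<n. w i) * det A"
proof -
  have "det (mat n n (\<lambda>(i,j). A $$ (i,j) * w j)) =
    (\<Sum>q\<in>{q. q permutes {0..<n}}. signof q * (\<Prod>i = 0..<n. A $$ (i, q i) * w (q i)))"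
    by (subst det_def'[of _ n]) (auto intro!: sum.cong prod.cong permutes_in_image)
  also have "\<dots> = (\<Sum>q\<in>{q. q permutes {0..<n}}. (\<Prod>i<n. w i) * (signof q * (\<Prod>i = 0..<n. A $$ (i, q i))))"
  proof (rule sum.cong[OF refl])
    fix q assume q: "q \<in> {q. q permutes {0..<n}}"
    have "(\<Prod>i = 0..<n. w (q i)) = (\<Prod>i = 0..<n. w i)"
      using prod.permute[of q "{0..<n}" w] q by (simp add: comp_def)
    then show "signof q * (\<Prod>i = 0..<n. A $$ (i, q i) * w (q i)) = (\<Prod>i<n. w i) * (signof q * (\<Prod>i = 0..<n. A $$ (i, q i)))"
      by (simp add: prod.distrib atLeast0LessThan)
  qed
  also have "\<dots> = (\<Prod>i<n. w i) * det A"
    by (simp add: det_def'[OF A] sum_distrib_left)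
  finally show ?thesis .
qed


definition pint :: "int \<Rightarrow> rat \<Rightarrow> bool" where
  "pint p q \<longleftrightarrow> (\<exists>x y :: int. \<not> p dvd y \<and> q = of_int x / of_int y)"

context
  fixes p :: int
  assumes pp: "prime p"
begin

lemma ndvd_nz: "\<not> p dvd y \<Longrightarrow> y \<noteq> 0" by auto

lemma ndvd_mult: "\<not> p dvd y1 \<Longrightarrow> \<not> p dvd y2 \<Longrightarrow> \<not> p dvd (y1 * y2)"
  using pp by (simp add: prime_dvd_mult_iff)

lemma pint_of_int: "pint p (of_int a)"
  unfolding pint_def using pp
  by (rule_tac x=a in exI, rule_tac x=1 in exI) (auto simp: prime_int_iff)

lemma pint_add: assumes "pint p a" "pint p b" shows "pint p (a + b)"
proof -
  obtain x1 y1 x2 y2 where h: "\<not> p dvd y1" "a = of_int x1 / of_int y1" "\<not> p dvd y2" "b = of_int x2 / of_int y2"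
    using assms unfolding pint_def by blast
  have "a + b = of_int (x1 * y2 + x2 * y1) / of_int (y1 * y2)"
    using h ndvd_nz[of y1] ndvd_nz[of y2] by (simp add: field_simps)
  then show ?thesis unfolding pint_def using ndvd_mult h by blast
qed

lemma pint_mult: assumes "pint p a" "pint p b" shows "pint p (a * b)"
proof -
  obtain x1 y1 x2 y2 where h: "\<not> p dvd y1" "a = of_int x1 / of_int y1" "\<not> p dvd y2" "b = of_int x2 / of_int y2"
    using assms unfolding pint_def by blast
  have "a * b = of_int (x1 * x2) / of_int (y1 * y2)"
    using h ndvd_nz[of y1] ndvd_nz[of y2] by (simp add: field_simps)
  then show ?thesis unfolding pint_def using ndvd_mult h by blast
qed

lemma pint_sum: "(\<And>i. i \<in> A \<Longrightarrow> pint p (f i)) \<Longrightarrow> pint p (\<Sum>i\<in>A. f i)"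
proof (induction A rule: infinite_finite_induct)
  case (infinite A) then show ?case using pint_of_int[of 0] by simp
next
  case empty then show ?case using pint_of_int[of 0] by simp
next
  case (insert x F) then show ?case by (simp add: pint_add)
qed

lemma pint_prod: "(\<And>i. i \<in> A \<Longrightarrow> pint p (f i)) \<Longrightarrow> pint p (\<Prod>i\<in>A. f i)"
proof (induction A rule: infinite_finite_induct)
  case (infinite A) then show ?case using pint_of_int[of 1] by simp
next
  case empty then show ?case using pint_of_int[of 1] by simp
next
  case (insert x F) then show ?case by (simp add: pint_mult)
qed

lemma rc_refl: "rat_cong a a p"
  unfolding rat_cong_def using pp
  by (rule_tac x=0 in exI, rule_tac x=1 in exI) (auto simp: prime_int_iff)

lemma rc_add: assumes "rat_cong a b p" "rat_cong c d p" shows "rat_cong (a + c) (b + d) p"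
proof -
  obtain x1 y1 x2 y2 where h: "p dvd x1" "\<not> p dvd y1" "a - b = of_int x1 / of_int y1"
     "p dvd x2" "\<not> p dvd y2" "c - d = of_int x2 / of_int y2"
    using assms unfolding rat_cong_def by blast
  have "(a + c) - (b + d) = (a - b) + (c - d)" by simp
  also have "\<dots> = of_int x1 / of_int y1 + of_int x2 / of_int y2" using h by simp
  also have "\<dots> = of_int (x1 * y2 + x2 * y1) / of_int (y1 * y2)"
    using h ndvd_nz[of y1] ndvd_nz[of y2] by (simp add: field_simps)
  finally have "(a + c) - (b + d) = of_int (x1 * y2 + x2 * y1) / of_int (y1 * y2)" .
  moreover have "p dvd (x1 * y2 + x2 * y1)" using h by simp
  ultimately show ?thesis unfolding rat_cong_def using ndvd_mult h by blast
qed

lemma rc_sym: assumes "rat_cong a b p" shows "rat_cong b a p"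
proof -
  obtain x1 y1 where h: "p dvd x1" "\<not> p dvd y1" "a - b = of_int x1 / of_int y1"
    using assms unfolding rat_cong_def by blast
  have "b - a = of_int (- x1) / of_int y1" using h by (simp add: field_simps)
  then show ?thesis unfolding rat_cong_def using h by (metis dvd_minus_iff)
qed

lemma rc_trans: assumes "rat_cong a b p" "rat_cong b c p" shows "rat_cong a c p"
proof -
  have "rat_cong (a + b) (b + c) p" using rc_add[OF assms] .
  then obtain x1 y1 where h: "p dvd x1" "\<not> p dvd y1" "(a + b) - (b + c) = of_int x1 / of_int y1"
    unfolding rat_cong_def by blast
  then show ?thesis unfolding rat_cong_def by (rule_tac x=x1 in exI, rule_tac x=y1 in exI) simp
qed

lemma rc_mult_left: assumes "rat_cong a b p" "pint p c" shows "rat_cong (c * a) (c * b) p"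
proof -
  obtain x1 y1 where h: "p dvd x1" "\<not> p dvd y1" "a - b = of_int x1 / of_int y1"
    using assms unfolding rat_cong_def by blast
  obtain x2 y2 where h2: "\<not> p dvd y2" "c = of_int x2 / of_int y2"
    using assms unfolding pint_def by blast
  have "c * a - c * b = c * (a - b)" by (simp add: algebra_simps)
  also have "\<dots> = of_int (x2 * x1) / of_int (y2 * y1)"
    using h h2 ndvd_nz[of y1] ndvd_nz[of y2] by simp
  finally have "c * a - c * b = of_int (x2 * x1) / of_int (y2 * y1)" .
  moreover have "p dvd x2 * x1" using h by simp
  ultimately show ?thesis unfolding rat_cong_def using ndvd_mult h h2 by blast
qed

lemma rc_mult: assumes "rat_cong a b p" "rat_cong c d p" "pint p a" "pint p d"
  shows "rat_cong (a * c) (b * d) p"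
proof -
  have 1: "rat_cong (a * c) (a * d) p" using rc_mult_left[OF assms(2,3)] .
  have 2: "rat_cong (d * a) (d * b) p" using rc_mult_left[OF assms(1,4)] .
  show ?thesis using rc_trans[OF 1] 2 by (simp add: mult.commute)
qed

lemma rc_pint: assumes "rat_cong a b p" "pint p b" shows "pint p a"
proof -
  obtain x1 y1 where h: "p dvd x1" "\<not> p dvd y1" "a - b = of_int x1 / of_int y1"
    using assms unfolding rat_cong_def by blast
  have "a = (a - b) + b" by simp
  moreover have "pint p (a - b)" unfolding pint_def using h by blast
  ultimately show ?thesis using pint_add[OF _ assms(2)] by metis
qed

lemma rc_sum: "(\<And>i. i \<in> A \<Longrightarrow> rat_cong (f i) (g i) p) \<Longrightarrow> rat_cong (\<Sum>i\<in>A. f i) (\<Sum>i\<in>A. g i) p"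
proof (induction A rule: infinite_finite_induct)
  case (infinite A) then show ?case using rc_refl by simp
next
  case empty then show ?case using rc_refl by simp
next
  case (insert x F) then show ?case by (simp add: rc_add)
qed

lemma rc_prod: "(\<And>i. i \<in> A \<Longrightarrow> rat_cong (f i) (g i) p \<and> pint p (g i)) \<Longrightarrow>
   rat_cong (\<Prod>i\<in>A. f i) (\<Prod>i\<in>A. g i) p"
proof (induction A rule: infinite_finite_induct)
  case (infinite A) then show ?case using rc_refl by simp
next
  case empty then show ?case using rc_refl by simp
next
  case (insert x F)
  have "pint p (\<Prod>i\<in>F. g i)" using insert by (intro pint_prod) auto
  moreover have "pint p (f x)" using insert rc_pint by blast
  ultimately show ?case using insert by (simp add: rc_mult)
qed

lemma rc_of_int: "rat_cong (of_int a) (of_int b) p \<longleftrightarrow> [a = b] (mod p)"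
proof
  assume "rat_cong (of_int a) (of_int b) p"
  then obtain x1 y1 where h: "p dvd x1" "\<not> p dvd y1" "of_int a - of_int b = (of_int x1 / of_int y1 :: rat)"
    unfolding rat_cong_def by blast
  then have "of_int ((a - b) * y1) = (of_int x1 :: rat)" using ndvd_nz[of y1] by (simp add: field_simps)
  then have "(a - b) * y1 = x1" using of_int_eq_iff by blast
  then have "p dvd (a - b) * y1" using h by simp
  then have "p dvd (a - b)" using h pp by (simp add: prime_dvd_mult_iff)
  then show "[a = b] (mod p)" by (simp add: cong_iff_dvd_diff)
next
  assume "[a = b] (mod p)"
  then have "p dvd (a - b)" by (simp add: cong_iff_dvd_diff)
  then show "rat_cong (of_int a) (of_int b) p" unfolding rat_cong_def using pp
    by (rule_tac x="a - b" in exI, rule_tac x=1 in exI) (auto simp: prime_int_iff)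
qed

lemma det_rc:
  fixes A :: "rat mat" and B :: "int mat"
  assumes A: "A \<in> carrier_mat n n" and B: "B \<in> carrier_mat n n"
    and c: "\<And>i j. i < n \<Longrightarrow> j < n \<Longrightarrow> rat_cong (A $$ (i,j)) (of_int (B $$ (i,j))) p"
  shows "rat_cong (det A) (of_int (det B)) p"
proof -
  let ?B = "map_mat (of_int :: int \<Rightarrow> rat) B"
  have "det ?B = of_int (det B)" by (rule of_int_hom.hom_det)
  moreover have "rat_cong (det A) (det ?B) p"
  proof -
    have "rat_cong (\<Sum>q\<in>{q. q permutes {0..<n}}. signof q * (\<Prod>i = 0..<n. A $$ (i, q i)))
       (\<Sum>q\<in>{q. q permutes {0..<n}}. signof q * (\<Prod>i = 0..<n. ?B $$ (i, q i))) p"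
    proof (rule rc_sum, rule rc_mult_left)
      fix q assume q: "q \<in> {q. q permutes {0..<n}}"
      show "pint p (signof q)" using pint_of_int[of "sign q"] by simp
      show "rat_cong (\<Prod>i = 0..<n. A $$ (i, q i)) (\<Prod>i = 0..<n. ?B $$ (i, q i)) p"
      proof (rule rc_prod)
        fix i assume i: "i \<in> {0..<n}"
        then have "q i < n" using q permutes_in_image by fastforce
        then show "rat_cong (A $$ (i, q i)) (?B $$ (i, q i)) p \<and> pint p (?B $$ (i, q i))"
          using c[of i "q i"] i B pint_of_int by auto
      qed
    qed
    then show ?thesis using det_def'[OF A] det_def'[of ?B n] B by simp
  qed
  ultimately show ?thesis by simp
qed

end

context
  fixes p :: nat
  assumes pp: "prime p" and po: "odd p"
begin

lemma p_gt2: "p > 2"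
  using pp po prime_ge_2_nat[OF pp] by (cases "p = 2") auto

lemma pi_prime: "prime (int p)" using pp by simp

lemma p_eq: "p = 2 * ((p - 1) div 2) + 1" using po p_gt2 by presburger

lemma coprime_ndvd: "\<not> int p dvd k \<Longrightarrow> coprime k (int p)"
  using pi_prime prime_imp_coprime by (metis coprime_commute)

lemma cong_cancel: "\<not> int p dvd k \<Longrightarrow> [a * k = b * k] (mod int p) \<Longrightarrow> [a = b] (mod int p)"
  using cong_mult_rcancel coprime_ndvd by blast

lemma fermat_int: assumes "\<not> int p dvd a" shows "[a ^ (p - 1) = 1] (mod int p)"
proof -
  define b where "b = nat (a mod int p)"
  have bi: "int b = a mod int p" unfolding b_def using p_gt2 by simp
  have "\<not> p dvd b"
  proof
    assume "p dvd b" then have "int p dvd int b" by simp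
    then have "int p dvd a" using bi by (simp add: dvd_mod_iff)
    then show False using assms by simp
  qed
  then have "[b ^ (p - 1) = 1] (mod p)" using fermat_theorem pp by blast
  then have "[int b ^ (p - 1) = 1] (mod int p)" by (metis cong_int_iff of_nat_1 of_nat_power)
  moreover have "[int b = a] (mod int p)" using bi by (simp add: cong_def)
  ultimately show ?thesis using cong_pow cong_sym cong_trans by blast
qed

lemma ndvd_succ: "k < p - 1 \<Longrightarrow> \<not> int p dvd int (k + 1)"
proof
  assume "k < p - 1" "int p dvd int (k + 1)"
  then have "p dvd k + 1" by (metis int_dvd_int_iff)
  then show False using \<open>k < p - 1\<close> by (simp add: nat_dvd_not_less)
qed

lemma powsum:
  fixes e :: nat
  defines "n \<equiv> (p - 1) div 2"
  shows "[(\<Sum>k<n. (int (k+1) ^ 2) ^ e) = (if n dvd e then int n else 0)] (mod int p)"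
proof (cases "n dvd e")
  case True
  then obtain q where q: "e = n * q" by blast
  have "[(\<Sum>k<n. (int (k+1) ^ 2) ^ e) = (\<Sum>k<n. 1)] (mod int p)"
  proof (rule cong_sum)
    fix k assume k: "k \<in> {..<n}"
    have pn: "p - 1 = 2 * n" using p_eq unfolding n_def by simp
    have e2: "2 * e = (p - 1) * q" unfolding q pn by simp
    have "(int (k+1) ^ 2) ^ e = int (k+1) ^ (2 * e)" by (simp add: power_mult)
    also have "\<dots> = (int (k+1) ^ (p - 1)) ^ q" unfolding e2 by (simp add: power_mult)
    finally have 1: "(int (k+1) ^ 2) ^ e = (int (k+1) ^ (p - 1)) ^ q" .
    have kp: "k < p - 1" using k p_eq unfolding n_def by simp
    have "[(int (k+1) ^ (p - 1)) ^ q = 1 ^ q] (mod int p)"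
      by (rule cong_pow, rule fermat_int, rule ndvd_succ[OF kp])
    with 1
    show "[(int (k+1) ^ 2) ^ e = 1] (mod int p)" by simp
  qed
  then show ?thesis using True by simp
next
  case False
  define H where "H = (\<Sum>k<n. (int (k+1) ^ 2) ^ e)"
  define f where "f = (\<lambda>x::nat. int x ^ (2 * e))"
  define T where "T = (\<Sum>x\<in>{1..p-1}. f x)"
  have pn: "p - 1 = 2 * n" using p_eq unfolding n_def by simp
  have split: "{1..p-1} = {1..n} \<union> {n+1..p-1}" using pn by auto
  have "{1..n} \<inter> {n+1..p-1} = {}" by auto
  then have T1: "T = (\<Sum>x\<in>{1..n}. f x) + (\<Sum>x\<in>{n+1..p-1}. f x)"
    unfolding T_def split by (rule sum.union_disjoint[rotated 2]) auto
  have T2: "(\<Sum>x\<in>{1..n}. f x) = H"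
    unfolding H_def f_def
    apply (rule sum.reindex_bij_witness[of _ "\<lambda>k. k + 1" "\<lambda>x. x - 1"])
    apply auto[4]
    apply (simp add: power_mult)
    done
  have pn': "p = 2 * n + 1" using pn p_gt2 by simp
  have T3: "(\<Sum>x\<in>{n+1..p-1}. f x) = (\<Sum>k<n. f (p - (k+1)))"
    by (rule sum.reindex_bij_witness[of _ "\<lambda>k. p - (k+1)" "\<lambda>x. p - 1 - x"]) (use pn' in auto)
  have T4: "[(\<Sum>k<n. f (p - (k+1))) = H] (mod int p)"
    unfolding H_def
  proof (rule cong_sum)
    fix k assume k: "k \<in> {..<n}"
    have "int (p - (k+1)) = int p - int (k+1)" using k pn by auto
    then have "[int (p - (k+1)) = - int (k+1)] (mod int p)"
      by (simp add: cong_iff_dvd_diff)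
    then have "[int (p - (k+1)) ^ (2*e) = (- int (k+1)) ^ (2*e)] (mod int p)" by (rule cong_pow)
    moreover have "(- int (k+1)) ^ (2*e) = int (k+1) ^ (2*e)" by (simp only: power_mult power2_minus)
    ultimately have "[int (p - (k+1)) ^ (2*e) = int (k+1) ^ (2*e)] (mod int p)" by simp
    then show "[f (p - (k+1)) = (int (k+1) ^ 2) ^ e] (mod int p)"
      unfolding f_def by (simp add: power_mult)
  qed
  have "[(\<Sum>x\<in>{1..n}. f x) + (\<Sum>x\<in>{n+1..p-1}. f x) = H + H] (mod int p)"
    unfolding T2 T3 by (rule cong_add[OF cong_refl T4])
  then have TH: "[T = 2 * H] (mod int p)" by (simp only: T1 mult_2)
  obtain g where g: "residue_primroot p g" using prime_primitive_root_exists[of p] pp p_gt2 by auto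
  have gc: "coprime p g" using g by (simp add: residue_primroot_def)
  have go: "ord p g = p - 1" using g totient_prime[OF pp] by (simp add: residue_primroot_def)
  define h where "h = (\<lambda>x. (g * x) mod p)"
  have hS: "h ` {1..p-1} \<subseteq> {1..p-1}"
  proof
    fix y assume "y \<in> h ` {1..p-1}"
    then obtain x where x: "x \<in> {1..p-1}" "y = h x" by blast
    have "\<not> p dvd x"
    proof
      assume "p dvd x" then have "p \<le> x" using x by (intro dvd_imp_le) auto
      then show False using x p_gt2 by auto
    qed
    moreover have "\<not> p dvd g" using gc pp coprime_absorb_left[of p g] not_prime_unit by blast
    ultimately have "\<not> p dvd g * x" using pp by (simp add: prime_dvd_mult_iff)
    then have "y \<noteq> 0" using x unfolding h_def by (simp add: dvd_eq_mod_eq_0)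
    moreover have "y < p" using x p_gt2 unfolding h_def by simp
    ultimately show "y \<in> {1..p-1}" by auto
  qed
  have hi: "inj_on h {1..p-1}"
  proof
    fix x y assume xy: "x \<in> {1..p-1}" "y \<in> {1..p-1}" "h x = h y"
    then have "[g * x = g * y] (mod p)" unfolding h_def cong_def by simp
    then have "[x = y] (mod p)" using cong_mult_lcancel_nat[of g p x y] gc by (simp add: coprime_commute)
    moreover have "x < p" "y < p" using xy(1,2) p_gt2 by auto
    ultimately show "x = y" using cong_less_modulus_unique_nat by blast
  qed
  have himg: "h ` {1..p-1} = {1..p-1}" using endo_inj_surj[OF _ hS hi] by simp
  have "T = (\<Sum>x\<in>h ` {1..p-1}. f x)" unfolding T_def himg ..
  also have "\<dots> = (\<Sum>x\<in>{1..p-1}. f (h x))" using sum.reindex[OF hi] by simp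
  finally have T5: "T = (\<Sum>x\<in>{1..p-1}. f (h x))" .
  have T6: "[(\<Sum>x\<in>{1..p-1}. f (h x)) = (\<Sum>x\<in>{1..p-1}. int g ^ (2*e) * f x)] (mod int p)"
  proof (rule cong_sum)
    fix x assume "x \<in> {1..p-1}"
    have "[int (h x) = int g * int x] (mod int p)" unfolding h_def
      by (simp add: cong_def zmod_int)
    then have "[int (h x) ^ (2*e) = (int g * int x) ^ (2*e)] (mod int p)" by (rule cong_pow)
    then show "[f (h x) = int g ^ (2*e) * f x] (mod int p)" unfolding f_def
      by (simp add: power_mult_distrib)
  qed
  have "(\<Sum>x\<in>{1..p-1}. int g ^ (2*e) * f x) = int g ^ (2*e) * T"
    by (simp add: T_def sum_distrib_left)
  then have "[T = int g ^ (2*e) * T] (mod int p)"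
    using T5 T6 by simp
  then have "int p dvd T - int g ^ (2*e) * T" by (simp add: cong_iff_dvd_diff)
  then have "int p dvd - (T - int g ^ (2*e) * T)" by (simp only: dvd_minus_iff)
  moreover have "- (T - int g ^ (2*e) * T) = (int g ^ (2*e) - 1) * T" by (simp add: algebra_simps)
  ultimately have "int p dvd (int g ^ (2*e) - 1) * T" by simp
  moreover have "\<not> int p dvd (int g ^ (2*e) - 1)"
  proof
    assume "int p dvd (int g ^ (2*e) - 1)"
    then have "[int g ^ (2*e) = 1] (mod int p)" by (simp add: cong_iff_dvd_diff)
    then have "[g ^ (2*e) = 1] (mod p)" by (metis cong_int_iff of_nat_1 of_nat_power)
    then have "ord p g dvd 2 * e" using ord_divides' by simp
    then have "2 * n dvd 2 * e" using go pn by simp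
    then show False using False by simp
  qed
  ultimately have "int p dvd T" using pi_prime by (simp add: prime_dvd_mult_iff)
  then have "int p dvd 2 * H" using TH cong_dvd_iff by blast
  moreover have "\<not> int p dvd 2" using p_gt2 by (auto dest: zdvd_imp_le)
  ultimately have "int p dvd H" using pi_prime by (simp add: prime_dvd_mult_iff)
  then show ?thesis using False unfolding H_def by (simp add: cong_0_iff)
qed

end

definition xk :: "nat \<Rightarrow> int" where "xk k = int (k+1) ^ 2"
definition V0 :: "nat \<Rightarrow> int mat" where "V0 n = mat n n (\<lambda>(k,b). xk k ^ b)"

lemma V0_carrier[simp]: "V0 n \<in> carrier_mat n n" unfolding V0_def by simp

lemma rho_permutes:
  fixes n :: nat
  defines "\<rho> \<equiv> (\<lambda>a. if a < n then (n - a) mod n else a)"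
  shows "\<rho> permutes {0..<n}"
proof (rule bij_imp_permutes)
  have inv: "\<rho> (\<rho> a) = a" if "a \<in> {0..<n}" for a
  proof (cases "a = 0")
    case True then show ?thesis using that unfolding \<rho>_def by simp
  next
    case False then show ?thesis using that unfolding \<rho>_def by auto
  qed
  have img: "\<rho> a \<in> {0..<n}" if "a \<in> {0..<n}" for a using that unfolding \<rho>_def by auto
  show "bij_betw \<rho> {0..<n} {0..<n}"
    by (rule bij_betw_byWitness[where f'=\<rho>]) (use inv img in auto)
  show "\<And>x. x \<notin> {0..<n} \<Longrightarrow> \<rho> x = x" unfolding \<rho>_def by auto
qed

lemma dvd_sum_iff:
  fixes n a b :: nat
  assumes "a < n" "b < n"
  shows "n dvd (a + b) \<longleftrightarrow> b = (n - a) mod n"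
proof (cases "a = 0")
  case True then show ?thesis using assms by (auto simp: dvd_eq_mod_eq_0)
next
  case False
  show ?thesis
  proof
    assume "n dvd a + b"
    then obtain c where c: "a + b = n * c" by blast
    have "n * c < n * 2" using c assms by linarith
    then have "c < 2" by simp
    moreover have "c \<noteq> 0" proof assume "c = 0" then show False using c False by simp qed
    ultimately have "c = 1" by simp
    then show "b = (n - a) mod n" using c assms False by auto
  next
    assume "b = (n - a) mod n"
    then have "b = n - a" using assms False by auto
    then show "n dvd a + b" using assms by auto
  qed
qed

context
  fixes p :: nat
  assumes pp: "prime p" and po: "odd p"
begin

lemma V0_ndvd:
  fixes n :: nat
  defines "n \<equiv> (p - 1) div 2"
  shows "\<not> int p dvd det (V0 n)"
proof
  assume dv: "int p dvd det (V0 n)"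
  have pn: "p = 2 * n + 1" using p_eq[OF pp po] unfolding n_def by simp
  define G where "G = transpose_mat (V0 n) * V0 n"
  have Gc: "G \<in> carrier_mat n n" unfolding G_def
    using V0_carrier[of n] mult_carrier_mat transpose_carrier_mat by blast
  have Gent: "G $$ (a, b) = (\<Sum>k<n. (int (k+1) ^ 2) ^ (a + b))" if "a < n" "b < n" for a b
    using that unfolding G_def V0_def xk_def
    by (simp add: scalar_prod_def atLeast0LessThan power_add)
  define Pm where "Pm = mat n n (\<lambda>(a,b). if n dvd (a+b) then int n else 0)"
  have ps: "[(\<Sum>k<n. (int (k+1)^2)^e) = (if n dvd e then int n else 0)] (mod int p)" for e
    using powsum[OF pp po, of e] unfolding n_def .
  have "[det G = det Pm] (mod int p)"
  proof (rule det_cong_int[OF Gc])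
    show "Pm \<in> carrier_mat n n" unfolding Pm_def by simp
    fix i j assume ij: "i < n" "j < n"
    show "[G $$ (i, j) = Pm $$ (i, j)] (mod int p)"
      unfolding Gent[OF ij] using ps[of "i+j"] ij by (simp add: Pm_def)
  qed
  moreover have "det G = det (V0 n) * det (V0 n)"
    unfolding G_def by (subst det_mult[of _ n]) (auto simp: det_transpose[OF V0_carrier])
  ultimately have "int p dvd det Pm" using dv by (metis cong_dvd_iff dvd_mult2)
  define \<rho> where "\<rho> = (\<lambda>a. if a < n then (n - a) mod n else a)"
  have rp: "\<rho> permutes {0..<n}" unfolding \<rho>_def by (rule rho_permutes)
  define Q where "Q = int n \<cdot>\<^sub>m (1\<^sub>m n :: int mat)"
  have Qc: "Q \<in> carrier_mat n n" unfolding Q_def by simp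
  have "Pm = mat n n (\<lambda>(i,j). Q $$ (\<rho> i, j))"
  proof (rule eq_matI)
    fix i j assume ij: "i < dim_row (mat n n (\<lambda>(i,j). Q $$ (\<rho> i, j)))" "j < dim_col (mat n n (\<lambda>(i,j). Q $$ (\<rho> i, j)))"
    then have "\<rho> i < n" using rp permutes_in_image by fastforce
    then show "Pm $$ (i, j) = mat n n (\<lambda>(i,j). Q $$ (\<rho> i, j)) $$ (i, j)"
      using ij dvd_sum_iff[of i n j] unfolding Pm_def Q_def \<rho>_def by auto
  qed (auto simp: Pm_def)
  then have "det Pm = signof \<rho> * det Q" using det_permute_rows[OF Qc rp] by simp
  also have "det Q = int n ^ n" unfolding Q_def by simp
  finally have dP: "det Pm = signof \<rho> * int n ^ n" .
  have "\<not> int p dvd int n ^ n"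
  proof
    assume "int p dvd int n ^ n"
    then have "int p dvd int n" using pi_prime[OF pp po] prime_dvd_power by blast
    then have "p dvd n" by (metis int_dvd_int_iff)
    moreover have "n > 0" using pn p_gt2[OF pp po] by simp
    ultimately show False using pn by (auto dest: dvd_imp_le)
  qed
  moreover have "sign \<rho> = 1 \<or> sign \<rho> = -1" by (simp add: sign_def)
  ultimately show False using \<open>int p dvd det Pm\<close> dP by auto
qed

end

lemma choose_step:
  assumes "[int (Suc N choose Suc l) = A] (mod q)" "[int (N choose l) = B] (mod q)"
  shows "[int (N choose Suc l) = A - B] (mod q)"
proof -
  have eq: "int (Suc N choose Suc l) - int (N choose l) = int (N choose Suc l)" by simp
  have "[int (Suc N choose Suc l) - int (N choose l) = A - B] (mod q)" by (rule cong_diff[OF assms])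
  then show ?thesis by (simp only: eq)
qed

context
  fixes p :: nat
  assumes pp: "prime p" and po: "odd p"
begin

lemma bin1: "l \<le> p - 1 \<Longrightarrow> [int ((p - 1) choose l) = (-1) ^ l] (mod int p)"
proof (induction l)
  case 0 then show ?case by simp
next
  case (Suc l)
  have p1: "Suc (p - 1) = p" using p_gt2[OF pp po] by simp
  have "p dvd (p choose Suc l)" using Suc.prems p_gt2[OF pp po] pp by (intro dvd_choose_prime) auto
  then have "[int (Suc (p - 1) choose Suc l) = 0] (mod int p)" unfolding p1
    by (simp add: cong_0_iff int_dvd_int_iff)
  from choose_step[OF this Suc.IH] Suc.prems have "[int ((p - 1) choose Suc l) = 0 - (-1) ^ l] (mod int p)" by simp
  then show ?case by simp
qed

lemma bin2: "l \<le> p - 2 \<Longrightarrow> [int ((p - 2) choose l) = (-1) ^ l * int (l + 1)] (mod int p)"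
proof (induction l)
  case 0 then show ?case by simp
next
  case (Suc l)
  have p1: "Suc (p - 2) = p - 1" using p_gt2[OF pp po] by simp
  have "[int (Suc (p - 2) choose Suc l) = (-1) ^ Suc l] (mod int p)" unfolding p1
    using Suc.prems by (intro bin1) auto
  from choose_step[OF this Suc.IH] Suc.prems
  have "[int ((p - 2) choose Suc l) = (-1) ^ Suc l - (-1) ^ l * int (l + 1)] (mod int p)" by simp
  moreover have "(-1::int) ^ Suc l - (-1) ^ l * int (l + 1) = (-1) ^ Suc l * int (Suc l + 1)"
    by (simp add: algebra_simps)
  ultimately show ?case by simp
qed

lemma bin3: "l \<le> p - 3 \<Longrightarrow> [2 * int ((p - 3) choose l) = (-1) ^ l * int ((l + 1) * (l + 2))] (mod int p)"
proof (induction l)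
  case 0 then show ?case by simp
next
  case (Suc l)
  have p1: "Suc (p - 3) = p - 2" using p_gt2[OF pp po] by simp
  have "[int (Suc (p - 3) choose Suc l) = (-1) ^ Suc l * int (Suc l + 1)] (mod int p)" unfolding p1
    using Suc.prems by (intro bin2) auto
  then have a: "[2 * int (Suc (p - 3) choose Suc l) = 2 * ((-1) ^ Suc l * int (Suc l + 1))] (mod int p)"
    by (rule cong_mult[OF cong_refl])
  have eq: "2 * int (Suc (p - 3) choose Suc l) - 2 * int ((p - 3) choose l) = 2 * int ((p - 3) choose Suc l)"
    by simp
  have "[2 * int (Suc (p - 3) choose Suc l) - 2 * int ((p - 3) choose l) = 2 * ((-1) ^ Suc l * int (Suc l + 1)) - (-1) ^ l * int ((l + 1) * (l + 2))] (mod int p)"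
    using Suc.prems by (intro cong_diff[OF a Suc.IH]) simp
  then have "[2 * int ((p - 3) choose Suc l) = 2 * ((-1) ^ Suc l * int (Suc l + 1)) - (-1) ^ l * int ((l + 1) * (l + 2))] (mod int p)"
    by (simp only: eq)
  moreover have "2 * ((-1::int) ^ Suc l * int (Suc l + 1)) - (-1) ^ l * int ((l + 1) * (l + 2)) = (-1) ^ Suc l * int ((Suc l + 1) * (Suc l + 2))"
    by (simp add: algebra_simps)
  ultimately show ?case by simp
qed

end

definition Mm :: "nat \<Rightarrow> int \<Rightarrow> nat \<Rightarrow> int mat" where
  "Mm n d m = mat n n (\<lambda>(j,k). (xk j + d * xk k) ^ m)"
definition cc :: "nat \<Rightarrow> int \<Rightarrow> nat \<Rightarrow> nat \<Rightarrow> int" where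
  "cc n d m b = int (m choose b) * d ^ (m - b) +
     (if b + n \<le> m then int (m choose (b + n)) * d ^ (m - b - n) else 0)"

lemma dvd_sel:
  fixes n m s l b :: nat
  assumes "m + s = 2 * n" "1 \<le> s" "l \<le> m" "b < n"
  shows "n dvd (m - l + b + s) \<longleftrightarrow> (l = b \<or> l = b + n)"
proof
  assume "n dvd (m - l + b + s)"
  then obtain c where c: "m - l + b + s = n * c" by blast
  have "n * c < n * 3" using c assms by linarith
  then have c3: "c < 3" by simp
  have "c \<noteq> 0" proof assume "c = 0" then show False using c assms by simp qed
  then have "c = 1 \<or> c = 2" using c3 by auto
  then show "l = b \<or> l = b + n"
  proof
    assume "c = 1" then have "m - l + b + s = n" using c by simp
    then show ?thesis using assms by linarith
  next
    assume "c = 2" then have "m - l + b + s = 2 * n" using c by simp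
    then show ?thesis using assms by linarith
  qed
next
  assume "l = b \<or> l = b + n"
  then show "n dvd (m - l + b + s)"
  proof
    assume "l = b" then have "m - l + b + s = n * 2" using assms by linarith
    then show ?thesis by simp
  next
    assume "l = b + n" then have "m - l + b + s = n * 1" using assms by linarith
    then show ?thesis by simp
  qed
qed

lemma sum_sel:
  fixes g :: "nat \<Rightarrow> int"
  assumes "b \<le> m" "0 < n"
  shows "(\<Sum>l\<le>m. if l = b \<or> l = b + n then g l else 0) = g b + (if b + n \<le> m then g (b + n) else 0)"
proof -
  have "(\<Sum>l\<le>m. if l = b \<or> l = b + n then g l else 0) = (\<Sum>l\<le>m. if l \<in> {b, b + n} then g l else 0)"
    by simp
  also have "\<dots> = sum g ({..m} \<inter> {b, b + n})" by (rule sum.inter_restrict[symmetric]) simp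
  finally have 1: "(\<Sum>l\<le>m. if l = b \<or> l = b + n then g l else 0) = sum g ({..m} \<inter> {b, b + n})" .
  show ?thesis
  proof (cases "b + n \<le> m")
    case True
    then have "{..m} \<inter> {b, b + n} = {b, b + n}" using assms by auto
    then show ?thesis using 1 True assms by simp
  next
    case False
    then have "{..m} \<inter> {b, b + n} = {b}" using assms by auto
    then show ?thesis using 1 False by simp
  qed
qed

context
  fixes p :: nat
  assumes pp: "prime p" and po: "odd p"
begin

lemma main_id:
  fixes n m s :: nat and d :: int
  assumes nd: "n = (p - 1) div 2" and ms: "m + s = 2 * n" and s1: "1 \<le> s" and s2: "s \<le> n + 1"
  shows "[det (Mm n d m) * (\<Prod>k<n. xk k ^ s) = (\<Prod>b<n. int n * cc n d m b)] (mod int p)"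
proof -
  have pn: "p = 2 * n + 1" using p_eq[OF pp po] nd by simp
  have n0: "0 < n" using pn p_gt2[OF pp po] by simp
  have xn: "[xk j ^ n = 1] (mod int p)" if "j < n" for j
  proof -
    have "xk j ^ n = int (j + 1) ^ (p - 1)" unfolding xk_def pn by (simp add: power_mult[symmetric])
    moreover have "[int (j + 1) ^ (p - 1) = 1] (mod int p)"
      using that pn by (intro fermat_int[OF pp po] ndvd_succ[OF pp po]) simp
    ultimately show ?thesis by simp
  qed
  have ps: "[(\<Sum>k<n. xk k ^ e) = (if n dvd e then int n else 0)] (mod int p)" for e
    using powsum[OF pp po, of e] unfolding nd[symmetric] xk_def by (simp add: power_mult)
  define Zs where "Zs = mat n n (\<lambda>(k,b). xk k ^ (b + s))"
  define N where "N = mat n n (\<lambda>(j,b). V0 n $$ (j,b) * (int n * cc n d m b))"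
  have Mc: "Mm n d m \<in> carrier_mat n n" unfolding Mm_def by simp
  have Zc: "Zs \<in> carrier_mat n n" unfolding Zs_def by simp
  have entry: "[(Mm n d m * Zs) $$ (j, b) = N $$ (j, b)] (mod int p)" if jb: "j < n" "b < n" for j b
  proof -
    define T where "T = (\<lambda>l k. (of_nat (m choose l) * xk j ^ l * d ^ (m - l)) * xk k ^ (m - l + b + s))"
    have "(Mm n d m * Zs) $$ (j, b) = (\<Sum>k<n. (xk j + d * xk k) ^ m * xk k ^ (b + s))"
      using jb unfolding Mm_def Zs_def by (simp add: scalar_prod_def atLeast0LessThan)
    also have "\<dots> = (\<Sum>k<n. \<Sum>l\<le>m. T l k)"
    proof (rule sum.cong[OF refl])
      fix k assume "k \<in> {..<n}"
      have "(xk j + d * xk k) ^ m * xk k ^ (b + s) =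
        (\<Sum>l\<le>m. of_nat (m choose l) * xk j ^ l * (d * xk k) ^ (m - l) * xk k ^ (b + s))"
        unfolding binomial_ring sum_distrib_right ..
      also have "\<dots> = (\<Sum>l\<le>m. T l k)"
      proof (rule sum.cong[OF refl])
        fix l assume "l \<in> {..m}"
        then have "m - l + b + s = (m - l) + (b + s)" by simp
        then show "of_nat (m choose l) * xk j ^ l * (d * xk k) ^ (m - l) * xk k ^ (b + s) = T l k"
          unfolding T_def by (simp only: power_mult_distrib power_add mult_ac)
      qed
      finally show "(xk j + d * xk k) ^ m * xk k ^ (b + s) = (\<Sum>l\<le>m. T l k)" .
    qed
    also have "\<dots> = (\<Sum>l\<le>m. \<Sum>k<n. T l k)" by (rule sum.swap)
    also have "\<dots> = (\<Sum>l\<le>m. (of_nat (m choose l) * xk j ^ l * d ^ (m - l)) * (\<Sum>k<n. xk k ^ (m - l + b + s)))"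
      unfolding T_def by (simp add: sum_distrib_left)
    finally have e1: "(Mm n d m * Zs) $$ (j, b) = (\<Sum>l\<le>m. (of_nat (m choose l) * xk j ^ l * d ^ (m - l)) * (\<Sum>k<n. xk k ^ (m - l + b + s)))" .
    define g where "g = (\<lambda>l. (of_nat (m choose l) * xk j ^ l * d ^ (m - l)) * int n)"
    have e2: "[(\<Sum>l\<le>m. (of_nat (m choose l) * xk j ^ l * d ^ (m - l)) * (\<Sum>k<n. xk k ^ (m - l + b + s)))
       = (\<Sum>l\<le>m. if l = b \<or> l = b + n then g l else 0)] (mod int p)"
    proof (rule cong_sum)
      fix l assume l: "l \<in> {..m}"
      have "[(of_nat (m choose l) * xk j ^ l * d ^ (m - l)) * (\<Sum>k<n. xk k ^ (m - l + b + s))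
        = (of_nat (m choose l) * xk j ^ l * d ^ (m - l)) * (if n dvd (m - l + b + s) then int n else 0)] (mod int p)"
        by (rule cong_mult[OF cong_refl ps])
      moreover have "n dvd (m - l + b + s) \<longleftrightarrow> (l = b \<or> l = b + n)"
        using dvd_sel[OF ms s1 _ jb(2)] l by simp
      ultimately show "[(of_nat (m choose l) * xk j ^ l * d ^ (m - l)) * (\<Sum>k<n. xk k ^ (m - l + b + s))
        = (if l = b \<or> l = b + n then g l else 0)] (mod int p)"
        unfolding g_def by auto
    qed
    have bm: "b \<le> m" using jb ms s2 by linarith
    have e3: "(\<Sum>l\<le>m. if l = b \<or> l = b + n then g l else 0) = g b + (if b + n \<le> m then g (b + n) else 0)"
      by (rule sum_sel[OF bm n0])
    have e4: "[g b + (if b + n \<le> m then g (b + n) else 0) = N $$ (j, b)] (mod int p)"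
    proof (cases "b + n \<le> m")
      case True
      have "xk j ^ (b + n) = xk j ^ b * xk j ^ n" by (simp add: power_add)
      then have "[xk j ^ (b + n) = xk j ^ b * 1] (mod int p)"
        by (metis cong_mult cong_refl xn[OF jb(1)])
      then have "[g (b + n) = (of_nat (m choose (b + n)) * xk j ^ b * d ^ (m - (b + n))) * int n] (mod int p)"
        unfolding g_def by (simp add: cong_mult cong_refl)
      then have "[g b + g (b + n) = g b + (of_nat (m choose (b + n)) * xk j ^ b * d ^ (m - (b + n))) * int n] (mod int p)"
        by (rule cong_add[OF cong_refl])
      moreover have "g b + (of_nat (m choose (b + n)) * xk j ^ b * d ^ (m - (b + n))) * int n = N $$ (j, b)"
        using jb True unfolding g_def N_def V0_def cc_def by (simp add: algebra_simps)
      ultimately show ?thesis using True by simp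
    next
      case False
      have "g b = N $$ (j, b)"
        using jb False unfolding g_def N_def V0_def cc_def by (simp add: algebra_simps)
      then show ?thesis using False by simp
    qed
    show ?thesis using e1 e2 e3 e4 by (metis cong_trans)
  qed
  have Nc: "N \<in> carrier_mat n n" unfolding N_def by simp
  have "[det (Mm n d m * Zs) = det N] (mod int p)"
    by (rule det_cong_int[OF _ Nc entry]) (use Mc Zc in auto)
  moreover have "det (Mm n d m * Zs) = det (Mm n d m) * det Zs" by (rule det_mult[OF Mc Zc])
  moreover have "Zs = mat n n (\<lambda>(i,j). xk i ^ s * V0 n $$ (i,j))"
    unfolding Zs_def V0_def by (rule eq_matI) (auto simp: power_add)
  then have "det Zs = (\<Prod>k<n. xk k ^ s) * det (V0 n)"
    using det_row_scale[OF V0_carrier[of n], of "\<lambda>k. xk k ^ s"] by simp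
  moreover have "det N = (\<Prod>b<n. int n * cc n d m b) * det (V0 n)"
    unfolding N_def by (rule det_col_scale[OF V0_carrier])
  ultimately have "[(det (Mm n d m) * (\<Prod>k<n. xk k ^ s)) * det (V0 n) = (\<Prod>b<n. int n * cc n d m b) * det (V0 n)] (mod int p)"
    by (simp add: mult.assoc)
  then show ?thesis using cong_cancel[OF pp po] V0_ndvd[OF pp po] nd by blast
qed

end

lemma sum_parity: fixes N :: nat shows "(-1::int) ^ ((\<Sum>b<N. b) + N) = (-1) ^ (N - N div 2)"
proof -
  have "(-1::int) ^ ((\<Sum>b<N. b) + N) = (-1) ^ (N - N div 2) \<and>
        (-1::int) ^ ((\<Sum>b<Suc N. b) + Suc N) = (-1) ^ (Suc N - Suc N div 2)"
  proof (induction N)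
    case 0 then show ?case by simp
  next
    case (Suc N)
    have "(\<Sum>b<Suc (Suc N). b) + Suc (Suc N) = ((\<Sum>b<N. b) + N) + 2 * (N + 1) + 1" by simp
    moreover have "Suc (Suc N) - Suc (Suc N) div 2 = (N - N div 2) + 1" by simp
    ultimately have "(-1::int) ^ ((\<Sum>b<Suc (Suc N). b) + Suc (Suc N)) = (-1) ^ (Suc (Suc N) - Suc (Suc N) div 2)"
      using Suc.IH by (simp add: power_add)
    then show ?case using Suc.IH by simp
  qed
  then show ?thesis by simp
qed

lemma gauss2: fixes N :: nat shows "2 * (\<Sum>b<N. b) = N * (N - 1)"
proof (induction N)
  case 0 then show ?case by simp
next
  case (Suc N)
  have "2 * (\<Sum>b<Suc N. b) = 2 * (\<Sum>b<N. b) + 2 * N" by simp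
  also have "\<dots> = N * (N - 1) + 2 * N" using Suc.IH by simp
  also have "\<dots> = Suc N * (Suc N - 1)" by (cases N) (simp_all add: algebra_simps)
  finally show ?case .
qed

lemma sum_rev: fixes N :: nat shows "(\<Sum>b<N. N - 1 - b) = (\<Sum>b<N. b)"
  by (rule sum.reindex_bij_witness[of _ "\<lambda>b. N - 1 - b" "\<lambda>b. N - 1 - b"]) auto

context
  fixes p :: nat
  assumes pp: "prime p" and po: "odd p"
begin

lemma eul: "[Legendre a (int p) = a ^ ((p - 1) div 2)] (mod int p)"
  using euler_criterion[of p a] pp p_gt2[OF pp po] by simp

lemma leg_eq:
  assumes "a \<in> {-1,0,1}" "b \<in> {-1,0,1}" "[a = b] (mod int p)"
  shows "a = b"
proof (rule ccontr)
  assume ne: "a \<noteq> b"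
  have "int p dvd a - b" using assms(3) by (simp add: cong_iff_dvd_diff)
  then have "\<bar>int p\<bar> \<le> \<bar>a - b\<bar>" using ne by (intro dvd_imp_le_int) auto
  moreover have "\<bar>a - b\<bar> \<le> 2" using assms(1,2) by auto
  ultimately show False using p_gt2[OF pp po] by simp
qed

lemma leg_range: "Legendre a m \<in> {-1,0,1}" by (simp add: Legendre_def)

lemma wilson_half:
  fixes n :: nat
  defines "n \<equiv> (p - 1) div 2"
  shows "[(\<Prod>k<n. int (k+1)) ^ 2 = (-1) ^ (n+1)] (mod int p)"
proof -
  have pn: "p = 2 * n + 1" using p_eq[OF pp po] unfolding n_def by simp
  define F where "F = (\<Prod>k<n. int (k+1))"
  have w: "[fact (p - 1) = (-1::int)] (mod int p)" using wilson_theorem[OF pp] by simp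
  have "(fact (p - 1) :: int) = (\<Prod>x\<in>{1..p-1}. int x)" by (simp add: fact_prod)
  also have "{1..p-1} = {1..n} \<union> {n+1..p-1}" using pn by auto
  also have "(\<Prod>x\<in>{1..n} \<union> {n+1..p-1}. int x) = (\<Prod>x\<in>{1..n}. int x) * (\<Prod>x\<in>{n+1..p-1}. int x)"
    by (rule prod.union_disjoint) auto
  also have "(\<Prod>x\<in>{1..n}. int x) = F" unfolding F_def
    by (rule prod.reindex_bij_witness[of _ "\<lambda>k. k + 1" "\<lambda>x. x - 1"]) auto
  also have "(\<Prod>x\<in>{n+1..p-1}. int x) = (\<Prod>k<n. int (p - (k+1)))"
    by (rule prod.reindex_bij_witness[of _ "\<lambda>k. p - (k+1)" "\<lambda>x. p - 1 - x"]) (use pn in auto)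
  finally have f1: "(fact (p - 1) :: int) = F * (\<Prod>k<n. int (p - (k+1)))" .
  have "[(\<Prod>k<n. int (p - (k+1))) = (\<Prod>k<n. (-1) * int (k+1))] (mod int p)"
  proof (rule cong_prod)
    fix k assume "k \<in> {..<n}"
    then have "int (p - (k+1)) = int p - int (k+1)" using pn by auto
    then show "[int (p - (k+1)) = (-1) * int (k+1)] (mod int p)"
      by (simp add: cong_iff_dvd_diff)
  qed
  moreover have "(\<Prod>k<n. (-1::int) * int (k+1)) = (-1) ^ n * F"
    unfolding F_def prod.distrib by simp
  ultimately have "[F * (\<Prod>k<n. int (p - (k+1))) = F * ((-1) ^ n * F)] (mod int p)"
    by (simp add: cong_mult)
  then have "[F * ((-1) ^ n * F) = -1] (mod int p)" using w f1 by (metis cong_sym cong_trans)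
  then have "[(-1) ^ n * (F * ((-1) ^ n * F)) = (-1) ^ n * (-1)] (mod int p)"
    by (rule cong_mult[OF cong_refl])
  moreover have "(-1::int) ^ n * (F * ((-1) ^ n * F)) = F ^ 2"
    by (simp add: power2_eq_square algebra_simps flip: power_add mult_2)
  ultimately show ?thesis unfolding F_def by simp
qed

lemma legendre_two:
  fixes n :: nat
  defines "n \<equiv> (p - 1) div 2"
  shows "Legendre 2 (int p) = (-1) ^ (n - n div 2)"
proof -
  have pn: "p = 2 * n + 1" using p_eq[OF pp po] unfolding n_def by simp
  interpret GAUSS p 2
  proof
    show "prime p" by (rule pp)
    show "2 < p" by (rule p_gt2[OF pp po])
    show "[2 \<noteq> 0] (mod int p)"
    proof
      assume "[2 = 0] (mod int p)"
      then have "int p dvd 2" by (simp add: cong_0_iff)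
      then have "int p \<le> 2" by (intro zdvd_imp_le) auto
      then show False using p_gt2[OF pp po] by simp
    qed
    show "(0::int) < 2" by simp
  qed
  have hp: "(int p - 1) div 2 = int n" using pn by simp
  have C': "C = (\<lambda>x. x * 2) ` A"
    unfolding C_def B_def image_image
  proof (rule image_cong[OF refl])
    fix x assume "x \<in> A"
    then have "0 < x" "x \<le> int n" unfolding A_def hp by auto
    then show "x * 2 mod int p = x * 2" using pn by (intro mod_pos_pos_trivial) auto
  qed
  have E': "E = (\<lambda>x. x * 2) ` {int (n div 2) + 1 .. int n}"
  proof -
    have "E = (\<lambda>x. x * 2) ` {x \<in> A. int n < x * 2}" unfolding E_def C' hp by auto
    moreover have "{x \<in> A. int n < x * 2} = {int (n div 2) + 1 .. int n}"
      unfolding A_def hp by auto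
    ultimately show ?thesis by simp
  qed
  have "card E = card {int (n div 2) + 1 .. int n}" unfolding E' by (rule card_image) (auto simp: inj_on_def)
  also have "\<dots> = n - n div 2" by simp
  finally show ?thesis using gauss_lemma by simp
qed

end

context
  fixes p :: nat and d :: int
  assumes pp: "prime p" and po: "odd p" and leg: "Legendre (- d) (int p) = -1"
begin

lemma dn: "[(-d) ^ ((p - 1) div 2) = -1] (mod int p)"
  using eul[OF pp po, of "-d"] leg by (simp add: cong_sym)

lemma dn': "[d ^ ((p - 1) div 2) = - ((-1) ^ ((p - 1) div 2))] (mod int p)"
proof -
  let ?n = "(p - 1) div 2"
  have "[(-1) ^ ?n * (-d) ^ ?n = (-1) ^ ?n * (-1)] (mod int p)" by (rule cong_mult[OF cong_refl dn])
  moreover have "(-1::int) ^ ?n * (-d) ^ ?n = d ^ ?n"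
    by (simp add: power_mult_distrib[symmetric])
  ultimately show ?thesis by simp
qed

lemma ndvd_d: "\<not> int p dvd d"
proof
  assume "int p dvd d"
  then have "[- d = 0] (mod int p)" by (simp add: cong_0_iff)
  then have "Legendre (- d) (int p) = 0" by (simp add: Legendre_def)
  then show False using leg by simp
qed

lemma xk_prod: "(\<Prod>k<n. xk k) = (\<Prod>k<n. int (k+1)) ^ 2"
  unfolding xk_def by (simp add: prod_power_distrib)

lemma nn_one:
  fixes n :: nat
  defines "n \<equiv> (p - 1) div 2"
  shows "[int n ^ (2 * n) = 1] (mod int p)"
proof -
  have pn: "p = 2 * n + 1" using p_eq[OF pp po] unfolding n_def by simp
  have "n < p - 1" "0 < n" using pn p_gt2[OF pp po] by auto
  then have "\<not> int p dvd int n" using ndvd_succ[OF pp po, of "n - 1"] by simp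
  then show ?thesis using fermat_int[OF pp po] pn by simp
qed

lemma S1_val:
  fixes n :: nat
  defines "n \<equiv> (p - 1) div 2"
  shows "[det (Mm n d (p - 2)) = - ((-d) ^ (\<Sum>b<n. b))] (mod int p)"
proof -
  have pn: "p = 2 * n + 1" using p_eq[OF pp po] unfolding n_def by simp
  define m where "m = p - 2"
  have mn: "m = 2 * n - 1" "m + 1 = 2 * n" using pn p_gt2[OF pp po] unfolding m_def by auto
  have mi: "[det (Mm n d m) * (\<Prod>k<n. xk k ^ 1) = (\<Prod>b<n. int n * cc n d m b)] (mod int p)"
    using main_id[OF pp po, of n m 1 d] mn n_def by simp
  have ccv: "[cc n d m b = (-1) ^ (b + n) * int n * d ^ (n - 1 - b)] (mod int p)" if b: "b < n" for b
  proof -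
    define k where "k = n - 1 - b"
    have e1: "m - b = n + k" "m - b - n = k" "b + n \<le> m" using b mn unfolding k_def by auto
    have cc1: "cc n d m b = int (m choose b) * (d ^ n * d ^ k) + int (m choose (b + n)) * d ^ k"
      unfolding cc_def e1 by (simp add: power_add)
    have b1: "[int (m choose b) = (-1) ^ b * int (b + 1)] (mod int p)"
      unfolding m_def using b mn by (intro bin2[OF pp po]) (simp add: m_def)
    have b2: "[int (m choose (b + n)) = (-1) ^ (b + n) * int (b + n + 1)] (mod int p)"
      unfolding m_def using b mn by (intro bin2[OF pp po]) (simp add: m_def)
    have "[cc n d m b = ((-1) ^ b * int (b + 1)) * ((- ((-1) ^ n)) * d ^ k) + ((-1) ^ (b + n) * int (b + n + 1)) * d ^ k] (mod int p)"
      unfolding cc1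
      by (intro cong_add cong_mult b1 b2 cong_refl dn'[unfolded n_def[symmetric]])
    moreover have "((-1::int) ^ b * int (b + 1)) * ((- ((-1) ^ n)) * d ^ k) + ((-1) ^ (b + n) * int (b + n + 1)) * d ^ k
       = (-1) ^ (b + n) * int n * d ^ k"
      by (simp add: power_add algebra_simps)
    ultimately show ?thesis unfolding k_def by simp
  qed
  define K where "K = (\<Sum>b<n. b)"
  have "[(\<Prod>b<n. int n * cc n d m b) = (\<Prod>b<n. int n * ((-1) ^ (b + n) * int n * d ^ (n - 1 - b)))] (mod int p)"
    by (rule cong_prod) (use ccv in \<open>auto intro: cong_mult\<close>)
  also have "(\<Prod>b<n. int n * ((-1) ^ (b + n) * int n * d ^ (n - 1 - b)))
     = (\<Prod>b<n. (int n ^ 2 * (-1) ^ n) * ((-1) ^ b * d ^ (n - 1 - b)))"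
    by (rule prod.cong) (auto simp: power_add power2_eq_square algebra_simps)
  also have "\<dots> = (int n ^ 2 * (-1) ^ n) ^ n * ((\<Prod>b<n. (-1) ^ b) * (\<Prod>b<n. d ^ (n - 1 - b)))"
    by (simp add: prod.distrib)
  also have "(\<Prod>b<n. (-1::int) ^ b) = (-1) ^ K" unfolding K_def by (simp add: power_sum)
  also have "(\<Prod>b<n. d ^ (n - 1 - b)) = d ^ K" unfolding K_def power_sum[symmetric] sum_rev ..
  also have "(int n ^ 2 * (-1) ^ n) ^ n * ((-1) ^ K * d ^ K) = int n ^ (2 * n) * ((-1) ^ (n * n) * (-d) ^ K)"
  proof -
    have 1: "(-d) ^ K = (-1) ^ K * d ^ K" by (rule power_minus)
    have 2: "(int n ^ 2 * (-1) ^ n) ^ n = int n ^ (2 * n) * (-1) ^ (n * n)"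
      by (simp add: power_mult_distrib power_mult[symmetric])
    show ?thesis unfolding 1 2 by (simp only: mult.assoc)
  qed
  finally have pr: "[(\<Prod>b<n. int n * cc n d m b) = int n ^ (2 * n) * ((-1) ^ (n * n) * (-d) ^ K)] (mod int p)" .
  have "[int n ^ (2 * n) * ((-1) ^ (n * n) * (-d) ^ K) = 1 * ((-1) ^ n * (-d) ^ K)] (mod int p)"
  proof (intro cong_mult cong_refl)
    show "[int n ^ (2 * n) = 1] (mod int p)" using nn_one unfolding n_def .
    show "[(-1::int) ^ (n * n) = (-1) ^ n] (mod int p)" by (simp add: minus_one_power_iff)
  qed
  from cong_trans[OF cong_trans[OF mi pr] this]
  have c1: "[det (Mm n d m) * (\<Prod>k<n. xk k) = (-1) ^ n * (-d) ^ K] (mod int p)"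
    by simp
  have "[det (Mm n d m) * (\<Prod>k<n. xk k) = det (Mm n d m) * (-1) ^ (n + 1)] (mod int p)"
    unfolding xk_prod using wilson_half[OF pp po] unfolding n_def[symmetric]
    by (intro cong_mult cong_refl) simp
  then have "[det (Mm n d m) * (-1) ^ (n + 1) = (-1) ^ n * (-d) ^ K] (mod int p)"
    using c1 by (metis cong_sym cong_trans)
  then have X: "[(det (Mm n d m) * (-1) ^ (n + 1)) * (-1) ^ (n + 1) = ((-1) ^ n * (-d) ^ K) * (-1) ^ (n + 1)] (mod int p)"
    by (rule cong_mult[OF _ cong_refl])
  have e1: "(det (Mm n d m) * (-1) ^ (n + 1)) * (-1) ^ (n + 1) = det (Mm n d m)"
    by (simp add: mult.assoc flip: power_add)
  have e2: "((-1::int) ^ n * (-d) ^ K) * (-1) ^ (n + 1) = - ((-d) ^ K)"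
    by (simp add: algebra_simps flip: power_add)
  from X[unfolded e1 e2] show ?thesis unfolding K_def m_def .
qed

end

context
  fixes p :: nat and d :: int
  assumes pp: "prime p" and po: "odd p" and leg: "Legendre (- d) (int p) = -1"
begin

lemma cc2_val:
  fixes n :: nat
  defines "n \<equiv> (p - 1) div 2"
  assumes b: "b < n"
  shows "[2 * cc n d (p - 3) b = (if b + 2 \<le> n then (-1) ^ (b + n) * int n * int (2 * b + n + 3) * d ^ (n - 2 - b)
          else (-1) ^ (n - 1) * int n * int (n + 1) * d ^ (n - 1))] (mod int p)"
proof -
  have pn: "p = 2 * n + 1" using p_eq[OF pp po] unfolding n_def by simp
  define m where "m = p - 3"
  have mn: "m = 2 * n - 2" using pn unfolding m_def by simp
  show ?thesis
  proof (cases "b + 2 \<le> n")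
    case True
    define k where "k = n - 2 - b"
    have e1: "m - b = n + k" "m - b - n = k" "b + n \<le> m" using True mn unfolding k_def by auto
    have cc1: "2 * cc n d m b = (2 * int (m choose b)) * (d ^ n * d ^ k) + (2 * int (m choose (b + n))) * d ^ k"
      unfolding cc_def e1 by (simp add: power_add algebra_simps)
    have b1: "[2 * int (m choose b) = (-1) ^ b * int ((b + 1) * (b + 2))] (mod int p)"
      unfolding m_def using e1 by (intro bin3[OF pp po]) (simp add: m_def)
    have b2: "[2 * int (m choose (b + n)) = (-1) ^ (b + n) * int ((b + n + 1) * (b + n + 2))] (mod int p)"
      unfolding m_def using e1 by (intro bin3[OF pp po]) (simp add: m_def)
    have "[2 * cc n d m b = ((-1) ^ b * int ((b + 1) * (b + 2))) * ((- ((-1) ^ n)) * d ^ k) + ((-1) ^ (b + n) * int ((b + n + 1) * (b + n + 2))) * d ^ k] (mod int p)"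
      unfolding cc1
      by (intro cong_add cong_mult b1 b2 cong_refl dn'[OF pp po leg, unfolded n_def[symmetric]])
    moreover have "((-1::int) ^ b * int ((b + 1) * (b + 2))) * ((- ((-1) ^ n)) * d ^ k) + ((-1) ^ (b + n) * int ((b + n + 1) * (b + n + 2))) * d ^ k
       = (-1) ^ (b + n) * int n * int (2 * b + n + 3) * d ^ k"
      by (simp add: power_add algebra_simps)
    ultimately show ?thesis using True unfolding k_def m_def by simp
  next
    case False
    then have bn: "b = n - 1" using b by simp
    have n1: "1 \<le> n" using b by simp
    have e1: "m - (n - 1) = n - 1" "\<not> (n - 1) + n \<le> m" using mn n1 by auto
    have cc1: "2 * cc n d m (n - 1) = 2 * int (m choose (n - 1)) * d ^ (n - 1)"
      unfolding cc_def using e1 by simp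
    have b1: "[2 * int (m choose (n - 1)) = (-1) ^ (n - 1) * int ((n - 1 + 1) * (n - 1 + 2))] (mod int p)"
      unfolding m_def using mn pn n1 by (intro bin3[OF pp po]) (simp add: m_def)
    have "(n - 1 + 1) * (n - 1 + 2) = n * (n + 1)" using n1 by auto
    then have eqi: "int ((n - 1 + 1) * (n - 1 + 2)) = int n * int (n + 1)" by (metis of_nat_mult)
    have "[2 * int (m choose (n - 1)) * d ^ (n - 1) = ((-1) ^ (n - 1) * (int n * int (n + 1))) * d ^ (n - 1)] (mod int p)"
      by (rule cong_mult[OF b1[unfolded eqi] cong_refl])
    then have "[2 * cc n d m b = (-1) ^ (n - 1) * int n * int (n + 1) * d ^ (n - 1)] (mod int p)"
      unfolding bn cc1 by (simp only: mult.assoc)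
    then show ?thesis using False unfolding m_def by simp
  qed
qed


lemma xk2_one:
  fixes n :: nat
  defines "n \<equiv> (p - 1) div 2"
  shows "[(\<Prod>k<n. xk k ^ 2) = 1] (mod int p)"
proof -
  have "(\<Prod>k<n. xk k ^ 2) = ((\<Prod>k<n. int (k+1)) ^ 2) ^ 2"
    unfolding xk_def by (simp add: prod_power_distrib)
  moreover have "[((\<Prod>k<n. int (k+1)) ^ 2) ^ 2 = ((-1) ^ (n + 1)) ^ 2] (mod int p)"
    using wilson_half[OF pp po] unfolding n_def by (intro cong_pow) simp
  moreover have "((-1::int) ^ (n + 1)) ^ 2 = 1" by (simp flip: power_mult)
  ultimately show ?thesis by simp
qed

lemma S2_zero:
  assumes p1: "p mod 4 = 1"
  shows "int p dvd det (Mm ((p - 1) div 2) d (p - 3))"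
proof -
  define n where "n = (p - 1) div 2"
  have pn: "p = 2 * n + 1" using p_eq[OF pp po] unfolding n_def by simp
  define t where "t = n div 2"
  have nt: "n = 2 * t" "1 \<le> t" using p1 pn p_gt2[OF pp po] unfolding t_def by presburger+
  define b where "b = t - 1"
  have b: "b < n" "b + 2 \<le> n" "2 * b + n + 3 = p" using nt pn unfolding b_def by auto
  have "[2 * cc n d (p - 3) b = (-1) ^ (b + n) * int n * int (2 * b + n + 3) * d ^ (n - 2 - b)] (mod int p)"
    using cc2_val[of b] b unfolding n_def by simp
  then have "int p dvd 2 * cc n d (p - 3) b" unfolding b(3) by (simp add: cong_dvd_iff)
  moreover have "\<not> int p dvd 2"
  proof
    assume "int p dvd 2" then have "int p \<le> 2" by (intro zdvd_imp_le) auto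
    then show False using p_gt2[OF pp po] by simp
  qed
  ultimately have "int p dvd cc n d (p - 3) b" using pi_prime[OF pp po] by (simp add: prime_dvd_mult_iff)
  then have "int p dvd int n * cc n d (p - 3) b" by simp
  moreover have "int n * cc n d (p - 3) b dvd (\<Prod>b<n. int n * cc n d (p - 3) b)"
    by (rule dvd_prodI) (use b in auto)
  ultimately have "int p dvd (\<Prod>b<n. int n * cc n d (p - 3) b)" by (rule dvd_trans)
  moreover have c1: "[det (Mm n d (p - 3)) * (\<Prod>k<n. xk k ^ 2) = (\<Prod>b<n. int n * cc n d (p - 3) b)] (mod int p)"
  proof -
    have m2: "p - 3 + 2 = 2 * n" using pn p_gt2[OF pp po] by simp
    show ?thesis by (rule main_id[OF pp po n_def m2]) (use nt in auto)
  qed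
  moreover have c2: "[det (Mm n d (p - 3)) * (\<Prod>k<n. xk k ^ 2) = det (Mm n d (p - 3)) * 1] (mod int p)"
    using xk2_one unfolding n_def[symmetric] by (intro cong_mult cong_refl)
  ultimately have "[det (Mm n d (p - 3)) = (\<Prod>b<n. int n * cc n d (p - 3) b)] (mod int p)"
    using cong_trans[OF cong_sym[OF c2] c1] by simp
  then have "int p dvd det (Mm n d (p - 3))" using \<open>int p dvd (\<Prod>b<n. int n * cc n d (p - 3) b)\<close>
    using cong_dvd_iff by blast
  then show ?thesis unfolding n_def .
qed


lemma rearr: "(2::int) ^ Suc a * (X * (Sg * (P * DK)) * (N * (N * Q * D2))) = (X * (N * N)) * Sg * (2 ^ a * P) * (2 * Q) * (DK * D2)"
  by (simp add: algebra_simps)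

lemma refl_prod:
  fixes t :: nat
  assumes pt: "p = 4 * t + 3"
  shows "[(\<Prod>b<2*t. int (4 * b + 5)) = (-1) ^ t * (\<Prod>r\<in>{1..t}. int (4 * r + 1)) ^ 2] (mod int p)"
proof -
  define Y where "Y = (\<Prod>r\<in>{1..t}. int (4 * r + 1))"
  have "(\<Prod>b<2*t. int (4 * b + 5)) = (\<Prod>r\<in>{1..2*t}. int (4 * r + 1))"
    by (rule prod.reindex_bij_witness[of _ "\<lambda>r. r - 1" "\<lambda>b. b + 1"]) auto
  also have "{1..2*t} = {1..t} \<union> {t+1..2*t}" by auto
  also have "(\<Prod>r\<in>{1..t} \<union> {t+1..2*t}. int (4 * r + 1)) = Y * (\<Prod>r\<in>{t+1..2*t}. int (4 * r + 1))"
    unfolding Y_def by (rule prod.union_disjoint) auto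
  also have "(\<Prod>r\<in>{t+1..2*t}. int (4 * r + 1)) = (\<Prod>s\<in>{1..t}. int (4 * (2 * t + 1 - s) + 1))"
    by (rule prod.reindex_bij_witness[of _ "\<lambda>s. 2 * t + 1 - s" "\<lambda>r. 2 * t + 1 - r"]) auto
  finally have e: "(\<Prod>b<2*t. int (4 * b + 5)) = Y * (\<Prod>s\<in>{1..t}. int (4 * (2 * t + 1 - s) + 1))" .
  have "[(\<Prod>s\<in>{1..t}. int (4 * (2 * t + 1 - s) + 1)) = (\<Prod>s\<in>{1..t}. (-1) * int (4 * s + 1))] (mod int p)"
  proof (rule cong_prod)
    fix s assume s: "s \<in> {1..t}"
    then have h: "int (4 * (2 * t + 1 - s) + 1) - (-1) * int (4 * s + 1) = int p * 2" using pt by auto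
    show "[int (4 * (2 * t + 1 - s) + 1) = (-1) * int (4 * s + 1)] (mod int p)"
      unfolding cong_iff_dvd_diff h by simp
  qed
  moreover have "(\<Prod>s\<in>{1..t}. (-1::int) * int (4 * s + 1)) = (-1) ^ t * Y"
    unfolding Y_def prod.distrib by simp
  ultimately have "[(\<Prod>b<2*t. int (4 * b + 5)) = Y * ((-1) ^ t * Y)] (mod int p)"
    unfolding e by (simp add: cong_mult)
  then show ?thesis unfolding Y_def by (simp add: power2_eq_square algebra_simps)
qed

lemma S2_val:
  assumes p3: "p mod 4 = 3"
  shows "[4 ^ ((p - 1) div 2) * det (Mm ((p - 1) div 2) d (p - 3)) = (\<Prod>r\<in>{1..(p - 3) div 4}. int (4 * r + 1)) ^ 2] (mod int p)"
proof -
  define n where "n = (p - 1) div 2"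
  have pn: "p = 2 * n + 1" using p_eq[OF pp po] unfolding n_def by simp
  define t where "t = (p - 3) div 4"
  have nt: "n = 2 * t + 1" "p = 4 * t + 3" using p3 pn unfolding t_def by presburger+
  define Y where "Y = (\<Prod>r\<in>{1..t}. int (4 * r + 1))"
  define M where "M = det (Mm n d (p - 3))"
  define R where "R = (\<lambda>b. if b + 2 \<le> n then (-1) ^ (b + n) * int n * int (2 * b + n + 3) * d ^ (n - 2 - b)
          else (-1) ^ (n - 1) * int n * int (n + 1) * d ^ (n - 1))"
  have c1: "[det (Mm n d (p - 3)) * (\<Prod>k<n. xk k ^ 2) = (\<Prod>b<n. int n * cc n d (p - 3) b)] (mod int p)"
  proof -
    have m2: "p - 3 + 2 = 2 * n" using pn p_gt2[OF pp po] by simp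
    show ?thesis by (rule main_id[OF pp po n_def m2]) (use nt in auto)
  qed
  have c2: "[det (Mm n d (p - 3)) * (\<Prod>k<n. xk k ^ 2) = det (Mm n d (p - 3)) * 1] (mod int p)"
    using xk2_one unfolding n_def[symmetric] by (intro cong_mult cong_refl)
  have c0: "[M = (\<Prod>b<n. int n * cc n d (p - 3) b)] (mod int p)"
    using cong_trans[OF cong_sym[OF c2] c1] unfolding M_def by simp
  have "(\<Prod>b<n. int n * (2 * cc n d (p - 3) b)) = (\<Prod>b<n. 2 * (int n * cc n d (p - 3) b))"
    by (simp add: algebra_simps)
  also have "\<dots> = 2 ^ n * (\<Prod>b<n. int n * cc n d (p - 3) b)"
    by (simp add: prod.distrib)
  finally have c3: "[2 ^ n * M = (\<Prod>b<n. int n * (2 * cc n d (p - 3) b))] (mod int p)"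
    using cong_mult[OF cong_refl[of "2 ^ n"] c0] by simp
  have c4: "[(\<Prod>b<n. int n * (2 * cc n d (p - 3) b)) = (\<Prod>b<n. int n * R b)] (mod int p)"
  proof (rule cong_prod, rule cong_mult[OF cong_refl])
    fix b assume "b \<in> {..<n}"
    then have "b < (p - 1) div 2" unfolding n_def by simp
    from cc2_val[OF this] show "[2 * cc n d (p - 3) b = R b] (mod int p)" unfolding R_def n_def .
  qed
  have "(\<Prod>b<n. int n * R b) = (\<Prod>b<2*t. int n * R b) * (int n * R (2 * t))"
    unfolding nt(1) by simp
  also have "R (2 * t) = int n * int (n + 1) * d ^ (2 * t)" unfolding R_def nt(1) by simp
  also have "(\<Prod>b<2*t. int n * R b) = (\<Prod>b<2*t. int n ^ 2 * ((-1) ^ (b + n) * (int (2 * b + n + 3) * d ^ (2 * t - 1 - b))))"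
  proof (rule prod.cong[OF refl])
    fix b assume "b \<in> {..<2*t}"
    then have "b + 2 \<le> n" "n - 2 - b = 2 * t - 1 - b" using nt by auto
    then show "int n * R b = int n ^ 2 * ((-1) ^ (b + n) * (int (2 * b + n + 3) * d ^ (2 * t - 1 - b)))"
      unfolding R_def by (simp add: power2_eq_square algebra_simps)
  qed
  also have "\<dots> = int n ^ (2 * (2 * t)) * ((\<Prod>b<2*t. (-1) ^ (b + n)) * ((\<Prod>b<2*t. int (2 * b + n + 3)) * (\<Prod>b<2*t. d ^ (2 * t - 1 - b))))"
    by (simp add: prod.distrib power_mult)
  finally have c5: "(\<Prod>b<n. int n * R b) = int n ^ (2 * (2 * t)) * ((\<Prod>b<2*t. (-1) ^ (b + n)) * ((\<Prod>b<2*t. int (2 * b + n + 3)) * (\<Prod>b<2*t. d ^ (2 * t - 1 - b)))) * (int n * (int n * int (n + 1) * d ^ (2 * t)))" .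
  define K where "K = (\<Sum>b<2*t. b)"
  define P where "P = (\<Prod>b<2*t. int (2 * b + n + 3))"
  have f2: "(\<Prod>b<2*t. (-1::int) ^ (b + n)) = (-1) ^ t"
  proof -
    have "(\<Prod>b<2*t. (-1::int) ^ (b + n)) = (-1) ^ (\<Sum>b<2*t. b + n)" by (simp add: power_sum)
    also have "(\<Sum>b<2*t. b + n) = K + 2 * t * n" unfolding K_def by (simp add: sum.distrib)
    also have "(-1::int) ^ (K + 2 * t * n) = (-1) ^ K" by (simp add: power_add power_mult)
    also have "2 * K = 2 * t * (2 * t - 1)" unfolding K_def using gauss2[of "2*t"] by simp
    then have "K = t * (2 * t - 1)" by simp
    then have "(-1::int) ^ K = (-1) ^ t"
      by (cases "t = 0") (auto simp: minus_one_power_iff even_mult_iff)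
    finally show ?thesis .
  qed
  have f3: "(\<Prod>b<2*t. d ^ (2 * t - 1 - b)) = d ^ K"
    unfolding K_def power_sum[symmetric] using sum_rev[of "2*t"] by simp
  have eq: "2 ^ n * (\<Prod>b<n. int n * R b) =
    int n ^ (2 * n) * (-1) ^ t * (2 ^ (2 * t) * P) * (2 * int (n + 1)) * (d ^ n) ^ t"
  proof -
    have "2 * K = 2 * t * (2 * t - 1)" unfolding K_def using gauss2[of "2*t"] by simp
    then have "K + 2 * t = n * t" using nt by (cases t) (auto simp: algebra_simps)
    then have dK: "d ^ K * d ^ (2 * t) = (d ^ n) ^ t" by (simp flip: power_add power_mult)
    have nn: "int n ^ (2 * (2 * t)) * (int n * int n) = int n ^ (2 * n)"
    proof -
      have e: "2 * n = 2 * (2 * t) + 2" using nt by simp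
      show ?thesis by (simp only: e power_add power2_eq_square)
    qed
    have n2: "(2::int) ^ n = 2 ^ Suc (2 * t)" using nt by simp
    have "2 ^ n * (\<Prod>b<n. int n * R b) = 2 ^ Suc (2 * t) * (int n ^ (2 * (2 * t)) * ((-1) ^ t * (P * d ^ K)) * (int n * (int n * int (n + 1) * d ^ (2 * t))))"
      unfolding c5 f2 f3 P_def[symmetric] n2 ..
    also have "\<dots> = (int n ^ (2 * (2 * t)) * (int n * int n)) * (-1) ^ t * (2 ^ (2 * t) * P) * (2 * int (n + 1)) * (d ^ K * d ^ (2 * t))"
      by (simp only: rearr)
    finally show ?thesis unfolding nn dK .
  qed
  have h1: "[2 ^ n * M = (\<Prod>b<n. int n * R b)] (mod int p)" using cong_trans[OF c3 c4] .
  have h2: "[4 ^ n * M = 2 ^ n * (\<Prod>b<n. int n * R b)] (mod int p)"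
  proof -
    have "(4::int) ^ n = (2 * 2) ^ n" by simp
    also have "\<dots> = 2 ^ n * 2 ^ n" by (rule power_mult_distrib)
    finally have E: "(4::int) ^ n * M = 2 ^ n * (2 ^ n * M)" by (simp only: mult.assoc)
    show ?thesis unfolding E by (rule cong_mult[OF cong_refl h1])
  qed
  have g1: "[int n ^ (2 * n) = 1] (mod int p)" using nn_one[OF pp po leg] unfolding n_def .
  have g2: "[2 ^ (2 * t) * P = (-1) ^ t * Y ^ 2] (mod int p)"
  proof -
    have "(\<Prod>b<2*t. int (4 * b + 2 * n + 6)) = (\<Prod>b<2*t. 2 * int (2 * b + n + 3))"
      by (rule prod.cong) auto
    also have "\<dots> = 2 ^ (2 * t) * P" unfolding P_def by (simp only: prod.distrib prod_constant card_lessThan)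
    finally have a: "2 ^ (2 * t) * P = (\<Prod>b<2*t. int (4 * b + 2 * n + 6))" by simp
    have b: "[(\<Prod>b<2*t. int (4 * b + 2 * n + 6)) = (\<Prod>b<2*t. int (4 * b + 5))] (mod int p)"
    proof (rule cong_prod)
      fix b assume "b \<in> {..<2*t}"
      have "int (4 * b + 2 * n + 6) - int (4 * b + 5) = int p" using pn by simp
      then show "[int (4 * b + 2 * n + 6) = int (4 * b + 5)] (mod int p)"
        unfolding cong_iff_dvd_diff by simp
    qed
    show ?thesis unfolding a Y_def using cong_trans[OF b refl_prod[OF nt(2)]] .
  qed
  have g3: "[2 * int (n + 1) = 1] (mod int p)"
  proof -
    have "2 * int (n + 1) - 1 = int p" using pn by simp
    then show ?thesis unfolding cong_iff_dvd_diff by simp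
  qed
  have g4: "[(d ^ n) ^ t = 1] (mod int p)"
  proof -
    have "[d ^ n = - ((-1) ^ n)] (mod int p)" using dn'[OF pp po leg] unfolding n_def .
    moreover have "- ((-1::int) ^ n) = 1" using nt by simp
    ultimately have "[d ^ n = 1] (mod int p)" by simp
    then show ?thesis using cong_pow by fastforce
  qed
  have "[int n ^ (2 * n) * (-1) ^ t * (2 ^ (2 * t) * P) * (2 * int (n + 1)) * (d ^ n) ^ t
      = 1 * (-1) ^ t * ((-1) ^ t * Y ^ 2) * 1 * 1] (mod int p)"
    by (intro cong_mult g1 g2 g3 g4 cong_refl)
  moreover have "1 * (-1::int) ^ t * ((-1) ^ t * Y ^ 2) * 1 * 1 = Y ^ 2"
    by (simp flip: power_add mult.assoc add: mult_2[symmetric] power_mult)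
  ultimately have "[4 ^ n * M = Y ^ 2] (mod int p)" using h2 eq by (metis cong_trans)
  then show ?thesis unfolding M_def Y_def n_def t_def .
qed

end

context
  fixes p :: nat and d :: int
  assumes pp: "prime p" and po: "odd p" and leg: "Legendre (- d) (int p) = -1"
begin

lemma D_ndvd:
  assumes jk: "j < (p - 1) div 2" "k < (p - 1) div 2"
  shows "\<not> int p dvd (int (j + 1) ^ 2 + d * int (k + 1) ^ 2)"
proof
  assume dv: "int p dvd (int (j + 1) ^ 2 + d * int (k + 1) ^ 2)"
  have pn: "p = 2 * ((p - 1) div 2) + 1" using p_eq[OF pp po] .
  have kp: "k < p - 1" using jk pn by linarith
  have "coprime (int (k + 1)) (int p)" using coprime_ndvd[OF pp po] ndvd_succ[OF pp po kp] by blast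
  then obtain u where u: "[int (k + 1) * u = 1] (mod int p)" using cong_solve_coprime_int by blast
  have "[int (j + 1) ^ 2 = - d * int (k + 1) ^ 2] (mod int p)"
    using dv by (simp add: cong_iff_dvd_diff)
  then have "[int (j + 1) ^ 2 * u ^ 2 = - d * (int (k + 1) * u) ^ 2] (mod int p)"
    by (metis cong_scalar_right mult.assoc power_mult_distrib)
  moreover have "[- d * (int (k + 1) * u) ^ 2 = - d * 1 ^ 2] (mod int p)"
    by (intro cong_mult cong_refl cong_pow u)
  ultimately have "[(int (j + 1) * u) ^ 2 = - d] (mod int p)"
    by (metis cong_trans power_mult_distrib mult_1_right power_one)
  then have "QuadRes (int p) (- d)" unfolding QuadRes_def by blast
  then show False using leg by (simp add: Legendre_def split: if_splits)
qed

lemma entry_rc: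
  assumes nd: "\<not> int p dvd D" and e: "e \<le> p - 1"
  shows "rat_cong (1 / (of_int D) ^ e) (of_int (D ^ (p - 1 - e))) (int p)"
proof -
  have D0: "D \<noteq> 0" using nd by auto
  have f: "int p dvd 1 - D ^ (p - 1)"
    using fermat_int[OF pp po nd] by (simp add: cong_iff_dvd_diff dvd_diff_commute)
  have ndy: "\<not> int p dvd D ^ e"
    using nd pi_prime[OF pp po] prime_dvd_power by blast
  have "(1 / (of_int D) ^ e :: rat) - of_int (D ^ (p - 1 - e)) = of_int (1 - D ^ (p - 1)) / of_int (D ^ e)"
  proof -
    have pe: "p - 1 - e + e = p - 1" using e by simp
    have "D ^ (p - 1 - e) * D ^ e = D ^ (p - 1)" by (metis pe power_add)
    then have "(of_int (D ^ (p - 1 - e)) :: rat) * of_int (D ^ e) = of_int (D ^ (p - 1))"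
      by (metis of_int_mult)
    then show ?thesis using D0 by (simp add: field_simps)
  qed
  then show ?thesis unfolding rat_cong_def using f ndy by blast
qed

lemma dinv_transfer:
  assumes e: "1 \<le> e" "e \<le> p - 1"
  shows "rat_cong (Dinv e d p) (of_int (S (p - 1 - e) d p)) (int p)"
  unfolding Dinv_def S_def
  apply (rule det_rc[OF pi_prime[OF pp po], where n="(p - 1) div 2"])
    apply (rule mat_carrier)
   apply (rule mat_carrier)
  subgoal premises prems for j k using entry_rc[OF D_ndvd[OF prems] e(2)] prems by simp
  done

end

lemma m43:
  fixes p :: nat
  assumes "p mod 4 = 3"
  shows "p = 4 * ((p - 3) div 4) + 3"
proof -
  define q where "q = p div 4"
  have a: "p = 4 * q + 3" using div_mult_mod_eq[of p 4] assms unfolding q_def by linarith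
  then have "(p - 3) div 4 = q" by simp
  then show ?thesis using a by simp
qed

theorem theorem1p2:
  fixes p :: nat and d :: int
  assumes "prime p" and "odd p" and "Legendre (- d) (int p) = -1"
  shows "(Legendre (S (p - 2) d p) (int p) = Legendre 2 (int p))
    \<and> (p mod 4 = 1 \<longrightarrow> rat_cong (Dinv 1 d p) (of_int (d ^ ((p - 1) div 4))) (int p))
    \<and> (p mod 4 = 3 \<longrightarrow> rat_cong (Dinv 1 d p) ((-1) ^ ((p + 1) div 4)) (int p))
    \<and> (Legendre (S (p - 3) d p) (int p) = (1 - Legendre (-1) (int p)) div 2)
    \<and> (p mod 4 = 3 \<longrightarrow> rat_cong (Dinv 2 d p)
           (1/4 * (\<Prod>r = 1..(p - 3) div 4. (of_nat r + 1/4) ^ 2)) (int p))"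
proof -
  note pp = assms(1) and po = assms(2) and leg = assms(3)
  have ppi: "prime (int p)" using pi_prime[OF pp po] .
  define n where "n = (p - 1) div 2"
  have pn: "p = 2 * n + 1" using p_eq[OF pp po] unfolding n_def by simp
  have p2: "p > 2" using p_gt2[OF pp po] .
  have SM: "S m d p = det (Mm n d m)" for m unfolding S_def Mm_def xk_def n_def ..
  define K where "K = (\<Sum>b<n. b)"
  have s1: "[S (p - 2) d p = - ((-d) ^ K)] (mod int p)"
    using S1_val[OF pp po leg] unfolding SM K_def n_def .
  have dn1: "[(-d) ^ n = -1] (mod int p)" using dn[OF pp po leg] unfolding n_def .
  have gk: "2 * K = n * (n - 1)" unfolding K_def by (rule gauss2)
  have ndd: "\<not> int p dvd d" using ndvd_d[OF pp po leg] .
  have A: "Legendre (S (p - 2) d p) (int p) = Legendre 2 (int p)"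
  proof -
    have "[Legendre (S (p - 2) d p) (int p) = S (p - 2) d p ^ n] (mod int p)"
      using eul[OF pp po] unfolding n_def .
    moreover have "[S (p - 2) d p ^ n = (- ((-d) ^ K)) ^ n] (mod int p)" by (rule cong_pow[OF s1])
    moreover have "(- ((-d) ^ K)) ^ n = (-1) ^ n * ((-d) ^ n) ^ K"
      by (simp add: power_minus[of "(-d) ^ K"] power_mult_distrib flip: power_mult) (simp add: mult.commute)
    moreover have "[(-1) ^ n * ((-d) ^ n) ^ K = (-1) ^ n * (-1) ^ K] (mod int p)"
      by (intro cong_mult cong_refl cong_pow dn1)
    moreover have "(-1::int) ^ n * (-1) ^ K = (-1) ^ (n - n div 2)"
      using sum_parity[of n] unfolding K_def by (simp add: power_add mult.commute)
    moreover have "Legendre 2 (int p) = (-1) ^ (n - n div 2)"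
      using legendre_two[OF pp po] unfolding n_def .
    ultimately have "[Legendre (S (p - 2) d p) (int p) = Legendre 2 (int p)] (mod int p)"
      by (metis cong_trans)
    then show ?thesis using leg_eq[OF pp po leg_range[OF pp po] leg_range[OF pp po]] by blast
  qed
  have B: "p mod 4 = 1 \<longrightarrow> rat_cong (Dinv 1 d p) (of_int (d ^ ((p - 1) div 4))) (int p)"
  proof
    assume p1: "p mod 4 = 1"
    define t where "t = n div 2"
    have nt: "n = 2 * t" "(p - 1) div 4 = t" using p1 pn unfolding t_def by presburger+
    have Kt: "K + t = n * t"
    proof -
      have "2 * K = 2 * t * (2 * t - 1)" using gk nt by simp
      then have "K = t * (2 * t - 1)" by simp
      then show ?thesis using nt by (cases t) (auto simp: algebra_simps)
    qed
    have "- ((-d) ^ K) * (-d) ^ t = - (((-d) ^ n) ^ t)" by (simp flip: power_add power_mult add: Kt)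
    moreover have "[- (((-d) ^ n) ^ t) = - ((-1) ^ t)] (mod int p)"
      unfolding cong_minus_minus_iff by (intro cong_pow dn1)
    ultimately have l: "[- ((-d) ^ K) * (-d) ^ t = - ((-1) ^ t)] (mod int p)" by simp
    have "d ^ t * (-d) ^ t = (-1) ^ t * d ^ n"
      by (simp add: nt power_minus[of d t] power_mult_distrib flip: power_add mult_2)
    moreover have "[(-1) ^ t * d ^ n = (-1) ^ t * (- ((-1) ^ n))] (mod int p)"
      using dn'[OF pp po leg] unfolding n_def[symmetric] by (intro cong_mult cong_refl)
    moreover have "(-1::int) ^ t * (- ((-1) ^ n)) = - ((-1) ^ t)" using nt by simp
    ultimately have r: "[d ^ t * (-d) ^ t = - ((-1) ^ t)] (mod int p)" by simp
    have "[S (p - 2) d p * (-d) ^ t = - ((-d) ^ K) * (-d) ^ t] (mod int p)"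
      by (rule cong_mult[OF s1 cong_refl])
    then have "[S (p - 2) d p * (-d) ^ t = d ^ t * (-d) ^ t] (mod int p)"
      using l r by (metis cong_sym cong_trans)
    moreover have "\<not> int p dvd (-d) ^ t"
      using ndd ppi by (metis dvd_minus_iff prime_dvd_power)
    ultimately have "[S (p - 2) d p = d ^ t] (mod int p)" using cong_cancel[OF pp po] by blast
    then have "rat_cong (of_int (S (p - 2) d p)) (of_int (d ^ t)) (int p)"
      using rc_of_int[OF ppi] by blast
    moreover have "rat_cong (Dinv 1 d p) (of_int (S (p - 2) d p)) (int p)"
      using dinv_transfer[OF pp po leg, of 1] p2 by (simp add: numeral_2_eq_2)
    ultimately show "rat_cong (Dinv 1 d p) (of_int (d ^ ((p - 1) div 4))) (int p)"
      unfolding nt(2) using rc_trans[OF ppi] by blast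
  qed
  have C: "p mod 4 = 3 \<longrightarrow> rat_cong (Dinv 1 d p) ((-1) ^ ((p + 1) div 4)) (int p)"
  proof
    assume p3: "p mod 4 = 3"
    define t where "t = (p - 3) div 4"
    have pt: "p = 4 * t + 3" using m43[OF p3] unfolding t_def .
    have nt: "n = 2 * t + 1" "(p + 1) div 4 = t + 1" using pt pn by simp_all
    have Kt: "K = n * t"
    proof -
      have "2 * K = n * (2 * t)" using gk nt by simp
      also have "\<dots> = 2 * (n * t)" by (simp only: mult.left_commute)
      finally show ?thesis by simp
    qed
    have ek: "- ((-d) ^ K) = - (((-d) ^ n) ^ t)" by (simp add: Kt power_mult)
    have "[- (((-d) ^ n) ^ t) = - ((-1) ^ t)] (mod int p)"
      unfolding cong_minus_minus_iff by (intro cong_pow dn1)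
    from cong_trans[OF s1[unfolded ek] this]
    have "[S (p - 2) d p = - ((-1) ^ t)] (mod int p)" .
    then have "rat_cong (of_int (S (p - 2) d p)) (of_int (- ((-1) ^ t))) (int p)"
      using rc_of_int[OF ppi] by blast
    moreover have "rat_cong (Dinv 1 d p) (of_int (S (p - 2) d p)) (int p)"
      using dinv_transfer[OF pp po leg, of 1] p2 by (simp add: numeral_2_eq_2)
    ultimately have rr: "rat_cong (Dinv 1 d p) (of_int (- ((-1) ^ t))) (int p)"
      using rc_trans[OF ppi] by blast
    have eqm: "(of_int (- ((-1) ^ t)) :: rat) = (-1) ^ ((p + 1) div 4)" unfolding nt(2) by simp
    show "rat_cong (Dinv 1 d p) ((-1) ^ ((p + 1) div 4)) (int p)"
      unfolding eqm[symmetric] by (rule rr)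
  qed
  have lm1: "[Legendre (-1) (int p) = (-1) ^ n] (mod int p)" using eul[OF pp po] unfolding n_def .
  have m13: "p mod 4 = 1 \<or> p mod 4 = 3" using po by presburger
  have D: "Legendre (S (p - 3) d p) (int p) = (1 - Legendre (-1) (int p)) div 2"
  proof (cases "p mod 4 = 1")
    case True
    then have "even n" using pn by presburger
    then have "[Legendre (-1) (int p) = 1] (mod int p)" using lm1 by simp
    then have l1: "Legendre (-1) (int p) = 1" using leg_eq[OF pp po leg_range[OF pp po]] by simp
    have "int p dvd S (p - 3) d p" using S2_zero[OF pp po leg True] unfolding SM n_def .
    then have "Legendre (S (p - 3) d p) (int p) = 0" by (simp add: Legendre_def cong_0_iff)
    then show ?thesis using l1 by simp
  next
    case False
    then have p3: "p mod 4 = 3" using m13 by simp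
    define t where "t = (p - 3) div 4"
    have pt: "p = 4 * t + 3" using m43[OF p3] unfolding t_def .
    have nt: "n = 2 * t + 1" using pt pn by simp
    then have "odd n" by simp
    then have "[Legendre (-1) (int p) = -1] (mod int p)" using lm1 by simp
    then have l1: "Legendre (-1) (int p) = -1" using leg_eq[OF pp po leg_range[OF pp po]] by simp
    define Y where "Y = (\<Prod>r\<in>{1..t}. int (4 * r + 1))"
    define Sv where "Sv = S (p - 3) d p"
    have sv: "[4 ^ n * Sv = Y ^ 2] (mod int p)"
      using S2_val[OF pp po leg p3] unfolding Sv_def SM Y_def t_def n_def .
    have nY: "\<not> int p dvd Y"
    proof
      assume "int p dvd Y"
      then have "\<exists>r\<in>{1..t}. int p dvd int (4 * r + 1)" unfolding Y_def
        by (subst (asm) prime_dvd_prod_iff[OF finite_atLeastAtMost ppi])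
      then obtain r where r: "r \<in> {1..t}" "int p dvd int (4 * r + 1)" by blast
      have "int (4 * r + 1) > 0" by simp
      then have "int p \<le> int (4 * r + 1)" using r(2) zdvd_imp_le by blast
      moreover have "r \<le> t" using r(1) by simp
      then have "4 * r + 1 < p" using pn nt by linarith
      ultimately show False by simp
    qed
    have nS: "\<not> [Sv = 0] (mod int p)"
    proof
      assume "[Sv = 0] (mod int p)"
      then have "[4 ^ n * Sv = 4 ^ n * 0] (mod int p)" by (rule cong_mult[OF cong_refl])
      from cong_trans[OF cong_sym[OF sv] this] have "[Y ^ 2 = 0] (mod int p)" by simp
      then have "int p dvd Y ^ 2" by (simp add: cong_0_iff)
      then show False using nY ppi prime_dvd_power by blast
    qed
    have qr: "QuadRes (int p) Sv"
    proof -
      define z where "z = Y * int (n + 1) ^ n"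
      have pw: "(int (n + 1) ^ n) ^ 2 = int (n + 1) ^ (2 * n)" by (metis power_mult mult.commute)
      have "z ^ 2 = Y ^ 2 * int (n + 1) ^ (2 * n)" unfolding z_def power_mult_distrib pw ..
      moreover have "[Y ^ 2 * int (n + 1) ^ (2 * n) = (4 ^ n * Sv) * int (n + 1) ^ (2 * n)] (mod int p)"
        by (rule cong_mult[OF cong_sym[OF sv] cong_refl])
      moreover have "(4 ^ n * Sv) * int (n + 1) ^ (2 * n) = Sv * ((2 * int (n + 1)) ^ 2) ^ n"
      proof -
        have q0: "(2 * x) ^ 2 = 4 * x ^ 2" for x :: int by (simp add: power2_eq_square algebra_simps)
        have q1: "(2 * int (n + 1)) ^ 2 = 4 * int (n + 1) ^ 2" by (rule q0)
        have q2: "(int (n + 1) ^ 2) ^ n = int (n + 1) ^ (2 * n)" by (simp only: power_mult)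
        have "((2 * int (n + 1)) ^ 2) ^ n = 4 ^ n * int (n + 1) ^ (2 * n)"
          unfolding q1 by (simp only: power_mult_distrib q2)
        then show ?thesis by (simp only: mult_ac)
      qed
      moreover have "[Sv * ((2 * int (n + 1)) ^ 2) ^ n = Sv * (1 ^ 2) ^ n] (mod int p)"
      proof -
        have "2 * int (n + 1) - 1 = int p" using pn by simp
        then have "[2 * int (n + 1) = 1] (mod int p)" unfolding cong_iff_dvd_diff by simp
        then show ?thesis by (intro cong_mult cong_refl cong_pow)
      qed
      ultimately have "[z ^ 2 = Sv * (1 ^ 2) ^ n] (mod int p)" using cong_trans by metis
      then have "[z ^ 2 = Sv] (mod int p)" by simp
      then show ?thesis unfolding QuadRes_def by blast
    qed
    have "Legendre Sv (int p) = 1" using nS qr by (simp add: Legendre_def)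
    then show ?thesis using l1 unfolding Sv_def by simp
  qed
  have E: "p mod 4 = 3 \<longrightarrow> rat_cong (Dinv 2 d p)
           (1/4 * (\<Prod>r = 1..(p - 3) div 4. (of_nat r + 1/4) ^ 2)) (int p)"
  proof
    assume p3: "p mod 4 = 3"
    define t where "t = (p - 3) div 4"
    have pt: "p = 4 * t + 3" using m43[OF p3] unfolding t_def .
    have nt: "n = 2 * t + 1" using pt pn by simp
    define Y where "Y = (\<Prod>r\<in>{1..t}. int (4 * r + 1))"
    define Sv where "Sv = S (p - 3) d p"
    have sv: "[4 ^ n * Sv = Y ^ 2] (mod int p)"
      using S2_val[OF pp po leg p3] unfolding Sv_def SM Y_def t_def n_def .
    have tr: "rat_cong (Dinv 2 d p) (of_int Sv) (int p)"
      using dinv_transfer[OF pp po leg, of 2] p2 unfolding Sv_def by (simp add: numeral_3_eq_3)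
    have n4: "\<not> int p dvd 4 ^ n"
    proof
      assume a: "int p dvd 4 ^ n"
      have "(4::int) ^ n = 2 ^ (2 * n)" by (simp add: power_mult)
      then have "int p dvd 2 ^ (2 * n)" using a by simp
      then have "int p dvd 2" using ppi prime_dvd_power by blast
      then have "int p \<le> 2" by (intro zdvd_imp_le) auto
      then show False using p2 by simp
    qed
    have "(of_int Sv :: rat) - of_int (Y ^ 2) / of_int (4 ^ n) = of_int (4 ^ n * Sv - Y ^ 2) / of_int (4 ^ n)"
      by (simp add: field_simps)
    moreover have "int p dvd 4 ^ n * Sv - Y ^ 2" using sv by (simp add: cong_iff_dvd_diff)
    ultimately have r2: "rat_cong (of_int Sv) (of_int (Y ^ 2) / of_int (4 ^ n)) (int p)"
      unfolding rat_cong_def using n4 by blast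
    have eqr: "(1/4 * (\<Prod>r = 1..(p - 3) div 4. (of_nat r + 1/4) ^ 2) :: rat) = of_int (Y ^ 2) / of_int (4 ^ n)"
    proof -
      have "(\<Prod>r = 1..t. (of_nat r + 1/4 :: rat) ^ 2) = (\<Prod>r = 1..t. (of_int (int (4 * r + 1)))^2 / 16)"
        by (rule prod.cong) (auto simp: field_simps power2_eq_square)
      also have "\<dots> = (\<Prod>r = 1..t. (of_int (int (4 * r + 1)) :: rat))^2 / 16 ^ t"
        by (simp add: prod_dividef prod_power_distrib)
      also have "(\<Prod>r = 1..t. (of_int (int (4 * r + 1)) :: rat)) = of_int Y"
        unfolding Y_def by simp
      finally have "(\<Prod>r = 1..t. (of_nat r + 1/4 :: rat) ^ 2) = (of_int Y) ^ 2 / 16 ^ t" .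
      moreover have "(of_int (4 ^ n) :: rat) = 4 * 16 ^ t" using nt by (simp add: power_mult)
      ultimately show ?thesis unfolding t_def[symmetric] by (simp add: field_simps)
    qed
    show "rat_cong (Dinv 2 d p) (1/4 * (\<Prod>r = 1..(p - 3) div 4. (of_nat r + 1/4) ^ 2)) (int p)"
      unfolding eqr using rc_trans[OF ppi tr r2] .
  qed
  show ?thesis by (intro conjI A B C D E)
qed


end
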